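(* Let $T$ be an $\mathcal L$-theory and $A\subseteq M$ for some $M\models T$. The following are equivalent: (i) for every non-empty $\mathcal L(A)$-definable set $X(x)$, every $\mathcal L$-formula $\phi(x;s)$ and every $N\models T$ with $A\subseteq N$, there exists a complete $\phi$-type $p$ over $N$ which is $\mathrm{Aut}(N/A)$-invariant and consistent with $X$; (ii) $T$ has the invariant extension property over $A$: for every $N\models T$ containing $A$, every complete type over $A$ can be extended to an $\mathrm{Aut}(N/A)$-invariant complete type over $N$.
   Context: A complete $\phi$-type over $N$ is a maximal consistent set of formulas $\phi(x;m)$, $\neg\phi(x;m)$ with $m$ from $N$. A type over $N$ is $\mathrm{Aut}(N/A)$-invariant if it is fixed by every automorphism of $N$ fixing $A$ pointwise. *)

theory Defs
  imports Main
begin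

text \<open>Terms and formulas may contain
parameters (Par a) naming elements a of the ambient universe type 'a; an L(B)-formula
is a well-formed formula all of whose parameters lie in B; an L-formula has no parameters.
All structures live on subsets of a common universe type 'a (as inside a monster model).\<close>

datatype ('f, 'a) trm = Var nat | Par 'a | Fn 'f "('f, 'a) trm list"

datatype ('f, 'r, 'a) fm =
    FF
  | Rel 'r "('f, 'a) trm list"
  | Eq "('f, 'a) trm" "('f, 'a) trm"
  | Neg "('f, 'r, 'a) fm"
  | Conj "('f, 'r, 'a) fm" "('f, 'r, 'a) fm"
  | Ex nat "('f, 'r, 'a) fm"

record ('f, 'r, 'a) struct =
  dom :: "'a set"
  fint :: "'f \<Rightarrow> 'a list \<Rightarrow> 'a"
  rint :: "'r \<Rightarrow> 'a list \<Rightarrow> bool"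

definition is_struct :: "('f \<Rightarrow> nat) \<Rightarrow> ('f, 'r, 'a) struct \<Rightarrow> bool" where
  "is_struct ar_f M \<longleftrightarrow> dom M \<noteq> {} \<and>
     (\<forall>f xs. length xs = ar_f f \<and> set xs \<subseteq> dom M \<longrightarrow> fint M f xs \<in> dom M)"

primrec wf_trm :: "('f \<Rightarrow> nat) \<Rightarrow> ('f, 'a) trm \<Rightarrow> bool" where
  "wf_trm ar_f (Var i) = True"
| "wf_trm ar_f (Par a) = True"
| "wf_trm ar_f (Fn f ts) = (length ts = ar_f f \<and> list_all (\<lambda>b. b) (map (wf_trm ar_f) ts))"

primrec wf_fm :: "('f \<Rightarrow> nat) \<Rightarrow> ('r \<Rightarrow> nat) \<Rightarrow> ('f, 'r, 'a) fm \<Rightarrow> bool" where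
  "wf_fm ar_f ar_r FF = True"
| "wf_fm ar_f ar_r (Rel r ts) = (length ts = ar_r r \<and> (\<forall>t\<in>set ts. wf_trm ar_f t))"
| "wf_fm ar_f ar_r (Eq s t) = (wf_trm ar_f s \<and> wf_trm ar_f t)"
| "wf_fm ar_f ar_r (Neg \<phi>) = wf_fm ar_f ar_r \<phi>"
| "wf_fm ar_f ar_r (Conj \<phi> \<psi>) = (wf_fm ar_f ar_r \<phi> \<and> wf_fm ar_f ar_r \<psi>)"
| "wf_fm ar_f ar_r (Ex v \<phi>) = wf_fm ar_f ar_r \<phi>"

primrec fv_trm :: "('f, 'a) trm \<Rightarrow> nat set" where
  "fv_trm (Var i) = {i}"
| "fv_trm (Par a) = {}"
| "fv_trm (Fn f ts) = \<Union>(set (map fv_trm ts))"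

primrec fv :: "('f, 'r, 'a) fm \<Rightarrow> nat set" where
  "fv FF = {}"
| "fv (Rel r ts) = (\<Union>t\<in>set ts. fv_trm t)"
| "fv (Eq s t) = fv_trm s \<union> fv_trm t"
| "fv (Neg \<phi>) = fv \<phi>"
| "fv (Conj \<phi> \<psi>) = fv \<phi> \<union> fv \<psi>"
| "fv (Ex v \<phi>) = fv \<phi> - {v}"

primrec pars_trm :: "('f, 'a) trm \<Rightarrow> 'a set" where
  "pars_trm (Var i) = {}"
| "pars_trm (Par a) = {a}"
| "pars_trm (Fn f ts) = \<Union>(set (map pars_trm ts))"

primrec pars :: "('f, 'r, 'a) fm \<Rightarrow> 'a set" where
  "pars FF = {}"
| "pars (Rel r ts) = (\<Union>t\<in>set ts. pars_trm t)"
| "pars (Eq s t) = pars_trm s \<union> pars_trm t"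
| "pars (Neg \<phi>) = pars \<phi>"
| "pars (Conj \<phi> \<psi>) = pars \<phi> \<union> pars \<psi>"
| "pars (Ex v \<phi>) = pars \<phi>"

primrec eval :: "('f, 'r, 'a) struct \<Rightarrow> (nat \<Rightarrow> 'a) \<Rightarrow> ('f, 'a) trm \<Rightarrow> 'a" where
  "eval M e (Var i) = e i"
| "eval M e (Par a) = a"
| "eval M e (Fn f ts) = fint M f (map (eval M e) ts)"

primrec sat :: "('f, 'r, 'a) struct \<Rightarrow> (nat \<Rightarrow> 'a) \<Rightarrow> ('f, 'r, 'a) fm \<Rightarrow> bool" where
  "sat M e FF = False"
| "sat M e (Rel r ts) = rint M r (map (eval M e) ts)"
| "sat M e (Eq s t) = (eval M e s = eval M e t)"
| "sat M e (Neg \<phi>) = (\<not> sat M e \<phi>)"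
| "sat M e (Conj \<phi> \<psi>) = (sat M e \<phi> \<and> sat M e \<psi>)"
| "sat M e (Ex v \<phi>) = (\<exists>a\<in>dom M. sat M (e(v := a)) \<phi>)"

text \<open>Substitution of parameters for some free variables (capture-free since parameters are closed).\<close>

primrec inst_trm :: "(nat \<Rightarrow> 'a option) \<Rightarrow> ('f, 'a) trm \<Rightarrow> ('f, 'a) trm" where
  "inst_trm s (Var i) = (case s i of None \<Rightarrow> Var i | Some a \<Rightarrow> Par a)"
| "inst_trm s (Par a) = Par a"
| "inst_trm s (Fn f ts) = Fn f (map (inst_trm s) ts)"

primrec inst :: "(nat \<Rightarrow> 'a option) \<Rightarrow> ('f, 'r, 'a) fm \<Rightarrow> ('f, 'r, 'a) fm" where
  "inst s FF = FF"
| "inst s (Rel r ts) = Rel r (map (inst_trm s) ts)"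
| "inst s (Eq t u) = Eq (inst_trm s t) (inst_trm s u)"
| "inst s (Neg \<phi>) = Neg (inst s \<phi>)"
| "inst s (Conj \<phi> \<psi>) = Conj (inst s \<phi>) (inst s \<psi>)"
| "inst s (Ex v \<phi>) = Ex v (inst (s(v := None)) \<phi>)"

text \<open>Renaming parameters by a map sigma (action of automorphisms on formulas).\<close>

primrec map_par_trm :: "('a \<Rightarrow> 'a) \<Rightarrow> ('f, 'a) trm \<Rightarrow> ('f, 'a) trm" where
  "map_par_trm \<sigma> (Var i) = Var i"
| "map_par_trm \<sigma> (Par a) = Par (\<sigma> a)"
| "map_par_trm \<sigma> (Fn f ts) = Fn f (map (map_par_trm \<sigma>) ts)"

primrec map_par :: "('a \<Rightarrow> 'a) \<Rightarrow> ('f, 'r, 'a) fm \<Rightarrow> ('f, 'r, 'a) fm" where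
  "map_par \<sigma> FF = FF"
| "map_par \<sigma> (Rel r ts) = Rel r (map (map_par_trm \<sigma>) ts)"
| "map_par \<sigma> (Eq t u) = Eq (map_par_trm \<sigma> t) (map_par_trm \<sigma> u)"
| "map_par \<sigma> (Neg \<phi>) = Neg (map_par \<sigma> \<phi>)"
| "map_par \<sigma> (Conj \<phi> \<psi>) = Conj (map_par \<sigma> \<phi>) (map_par \<sigma> \<psi>)"
| "map_par \<sigma> (Ex v \<phi>) = Ex v (map_par \<sigma> \<phi>)"

definition fm_over :: "('f \<Rightarrow> nat) \<Rightarrow> ('r \<Rightarrow> nat) \<Rightarrow> 'a set \<Rightarrow> ('f, 'r, 'a) fm \<Rightarrow> bool" where
  "fm_over ar_f ar_r B \<phi> \<longleftrightarrow> wf_fm ar_f ar_r \<phi> \<and> pars \<phi> \<subseteq> B"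

abbreviation L_fm :: "('f \<Rightarrow> nat) \<Rightarrow> ('r \<Rightarrow> nat) \<Rightarrow> ('f, 'r, 'a) fm \<Rightarrow> bool" where
  "L_fm ar_f ar_r \<phi> \<equiv> fm_over ar_f ar_r {} \<phi>"

definition is_theory :: "('f \<Rightarrow> nat) \<Rightarrow> ('r \<Rightarrow> nat) \<Rightarrow> ('f, 'r, 'a) fm set \<Rightarrow> bool" where
  "is_theory ar_f ar_r T \<longleftrightarrow> (\<forall>\<phi>\<in>T. L_fm ar_f ar_r \<phi> \<and> fv \<phi> = {})"

definition models :: "('f \<Rightarrow> nat) \<Rightarrow> ('r \<Rightarrow> nat) \<Rightarrow> ('f, 'r, 'a) fm set \<Rightarrow> ('f, 'r, 'a) struct \<Rightarrow> bool" where
  "models ar_f ar_r T M \<longleftrightarrow> is_struct ar_f M \<and> (\<forall>\<phi>\<in>T. \<forall>e. sat M e \<phi>)"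

text \<open>"A is contained in N" for models M, N with A a subset of M: N contains A and
N, M have the same elementary diagram over A (i.e. both are elementary submodels of a common
monster model containing A).\<close>
definition equiv_over :: "('f \<Rightarrow> nat) \<Rightarrow> ('r \<Rightarrow> nat) \<Rightarrow> 'a set \<Rightarrow> ('f, 'r, 'a) struct \<Rightarrow> ('f, 'r, 'a) struct \<Rightarrow> bool" where
  "equiv_over ar_f ar_r A M N \<longleftrightarrow> A \<subseteq> dom M \<and> A \<subseteq> dom N \<and>
     (\<forall>\<phi> e. fm_over ar_f ar_r A \<phi> \<and> fv \<phi> = {} \<longrightarrow> (sat M e \<phi> \<longleftrightarrow> sat N e \<phi>))"

text \<open>Consistency of a set of formulas with parameters in a model M (with the elementary
diagram of M): finite satisfiability in M.\<close>
definition finsat :: "('f, 'r, 'a) struct \<Rightarrow> ('f, 'r, 'a) fm set \<Rightarrow> bool" where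
  "finsat M p \<longleftrightarrow> (\<forall>F. F \<subseteq> p \<and> finite F \<longrightarrow>
      (\<exists>e. (\<forall>i. e i \<in> dom M) \<and> (\<forall>\<psi>\<in>F. sat M e \<psi>)))"

definition complete_type :: "('f \<Rightarrow> nat) \<Rightarrow> ('r \<Rightarrow> nat) \<Rightarrow> ('f, 'r, 'a) struct \<Rightarrow> 'a set \<Rightarrow> nat \<Rightarrow> ('f, 'r, 'a) fm set \<Rightarrow> bool" where
  "complete_type ar_f ar_r M B n p \<longleftrightarrow>
     (\<forall>\<phi>\<in>p. fm_over ar_f ar_r B \<phi> \<and> fv \<phi> \<subseteq> {..<n}) \<and> finsat M p \<and>
     (\<forall>\<phi>. fm_over ar_f ar_r B \<phi> \<and> fv \<phi> \<subseteq> {..<n} \<longrightarrow> \<phi> \<in> p \<or> Neg \<phi> \<in> p)"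

text \<open>phi(x;m): for an L-formula phi(x;s) with x = x_0..x_(n-1), s = x_n..x_(n+k-1),
substitute parameters m_0..m_(k-1) for s.\<close>
definition phi_inst :: "('f, 'r, 'a) fm \<Rightarrow> nat \<Rightarrow> nat \<Rightarrow> (nat \<Rightarrow> 'a) \<Rightarrow> ('f, 'r, 'a) fm" where
  "phi_inst \<phi> n k m = inst (\<lambda>i. if n \<le> i \<and> i < n + k then Some (m (i - n)) else None) \<phi>"

definition phi_type :: "('f, 'r, 'a) struct \<Rightarrow> nat \<Rightarrow> nat \<Rightarrow> ('f, 'r, 'a) fm \<Rightarrow> ('f, 'r, 'a) fm set \<Rightarrow> bool" where
  "phi_type N n k \<phi> p \<longleftrightarrow>
     p \<subseteq> {\<psi>. \<exists>m. (\<forall>i<k. m i \<in> dom N) \<and> (\<psi> = phi_inst \<phi> n k m \<or> \<psi> = Neg (phi_inst \<phi> n k m))} \<and>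
     finsat N p \<and>
     (\<forall>m. (\<forall>i<k. m i \<in> dom N) \<longrightarrow> phi_inst \<phi> n k m \<in> p \<or> Neg (phi_inst \<phi> n k m) \<in> p)"

definition automorphism :: "('f \<Rightarrow> nat) \<Rightarrow> ('r \<Rightarrow> nat) \<Rightarrow> ('f, 'r, 'a) struct \<Rightarrow> ('a \<Rightarrow> 'a) \<Rightarrow> bool" where
  "automorphism ar_f ar_r N \<sigma> \<longleftrightarrow> bij_betw \<sigma> (dom N) (dom N) \<and>
     (\<forall>f xs. length xs = ar_f f \<and> set xs \<subseteq> dom N \<longrightarrow> \<sigma> (fint N f xs) = fint N f (map \<sigma> xs)) \<and>
     (\<forall>r xs. length xs = ar_r r \<and> set xs \<subseteq> dom N \<longrightarrow> (rint N r (map \<sigma> xs) \<longleftrightarrow> rint N r xs))"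

definition invariant :: "('f \<Rightarrow> nat) \<Rightarrow> ('r \<Rightarrow> nat) \<Rightarrow> ('f, 'r, 'a) struct \<Rightarrow> 'a set \<Rightarrow> ('f, 'r, 'a) fm set \<Rightarrow> bool" where
  "invariant ar_f ar_r N A p \<longleftrightarrow>
     (\<forall>\<sigma>. automorphism ar_f ar_r N \<sigma> \<and> (\<forall>a\<in>A. \<sigma> a = a) \<longrightarrow> map_par \<sigma> ` p = p)"

end

theory Submission
  imports Defs
begin



lemma eval_inst_trm: "eval M e (inst_trm s t) = eval M (\<lambda>i. case s i of None \<Rightarrow> e i | Some a \<Rightarrow> a) t"
  by (induction t) (auto split: option.split simp: comp_def cong: map_cong)

lemma sat_inst: "sat M e (inst s \<phi>) = sat M (\<lambda>i. case s i of None \<Rightarrow> e i | Some a \<Rightarrow> a) \<phi>"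
proof (induction \<phi> arbitrary: e s)
  case (Ex v \<phi>)
  have "\<And>a. (\<lambda>i. case (s(v:=None)) i of None \<Rightarrow> (e(v:=a)) i | Some b \<Rightarrow> b) =
      (\<lambda>i. case s i of None \<Rightarrow> e i | Some b \<Rightarrow> b)(v:=a)"
    by (auto simp: fun_eq_iff split: option.split)
  then show ?case using Ex by simp
qed (simp_all add: eval_inst_trm comp_def)

lemma eval_fv: "\<forall>i\<in>fv_trm t. e i = e' i \<Longrightarrow> eval M e t = eval M e' t"
proof (induction t)
  case (Fn f ts)
  then have "\<forall>x\<in>set ts. eval M e x = eval M e' x" by auto
  then have "map (eval M e) ts = map (eval M e') ts" by (simp only: map_eq_conv)
  then show ?case by (simp only: eval.simps)
qed auto

lemma sat_fv: "\<forall>i\<in>fv \<phi>. e i = e' i \<Longrightarrow> sat M e \<phi> = sat M e' \<phi>"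
proof (induction \<phi> arbitrary: e e')
  case (Rel r ts)
  then have "\<forall>x\<in>set ts. eval M e x = eval M e' x" using eval_fv by fastforce
  then have "map (eval M e) ts = map (eval M e') ts" by (simp only: map_eq_conv)
  then show ?case by (metis sat.simps(2))
next
  case (Eq s t)
  then have "eval M e s = eval M e' s" "eval M e t = eval M e' t" using eval_fv[of s e e'] eval_fv[of t e e'] by auto
  then show ?case by (simp only: sat.simps)
next
  case (Conj \<phi>1 \<phi>2)
  have "sat M e \<phi>1 = sat M e' \<phi>1" using Conj.prems by (intro Conj.IH) auto
  moreover have "sat M e \<phi>2 = sat M e' \<phi>2" using Conj.prems by (intro Conj.IH) auto
  ultimately show ?case by simp
next
  case (Ex v \<phi>)
  have "\<And>a. sat M (e(v:=a)) \<phi> = sat M (e'(v:=a)) \<phi>" using Ex by (intro Ex.IH) auto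
  then show ?case by simp
qed auto

lemma fv_inst_trm: "fv_trm (inst_trm s t) = fv_trm t - {i. s i \<noteq> None}"
  by (induction t) (auto split: option.split)

lemma fv_inst: "fv (inst s \<phi>) = fv \<phi> - {i. s i \<noteq> None}"
  by (induction \<phi> arbitrary: s) (auto simp: fv_inst_trm)

lemma pars_inst_trm: "pars_trm (inst_trm s t) \<subseteq> pars_trm t \<union> {a. \<exists>i. s i = Some a}"
  by (induction t) (auto split: option.split)

lemma pars_inst: "pars (inst s \<phi>) \<subseteq> pars \<phi> \<union> {a. \<exists>i. s i = Some a}"
proof (induction \<phi> arbitrary: s)
  case (Ex v \<phi>)
  have "{a. \<exists>i. (s(v:=None)) i = Some a} \<subseteq> {a. \<exists>i. s i = Some a}" by auto
  then have "pars (inst (s(v:=None)) \<phi>) \<subseteq> pars \<phi> \<union> {a. \<exists>i. s i = Some a}"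
    using Ex[of "s(v:=None)"] by blast
  then show ?case by (simp only: inst.simps pars.simps)
qed (use pars_inst_trm in fastforce)+

lemma wf_inst_trm: "wf_trm ar_f (inst_trm s t) = wf_trm ar_f t"
  by (induction t) (auto split: option.split simp: list_all_iff)

lemma wf_inst: "wf_fm ar_f ar_r (inst s \<phi>) = wf_fm ar_f ar_r \<phi>"
  by (induction \<phi> arbitrary: s) (auto simp: wf_inst_trm)

lemma map_par_trm_inst: "map_par_trm \<sigma> (inst_trm s t) = inst_trm (map_option \<sigma> \<circ> s) (map_par_trm \<sigma> t)"
  by (induction t) (auto split: option.split)

lemma map_par_inst: "map_par \<sigma> (inst s \<phi>) = inst (map_option \<sigma> \<circ> s) (map_par \<sigma> \<phi>)"
proof (induction \<phi> arbitrary: s)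
  case (Ex v \<phi>)
  have h: "map_option \<sigma> \<circ> s(v := None) = (map_option \<sigma> \<circ> s)(v:=None)" by auto
  have "map_par \<sigma> (inst s (Ex v \<phi>)) = Ex v (map_par \<sigma> (inst (s(v:=None)) \<phi>))" by simp
  also have "\<dots> = Ex v (inst (map_option \<sigma> \<circ> s(v:=None)) (map_par \<sigma> \<phi>))" by (simp only: Ex.IH)
  also have "\<dots> = Ex v (inst ((map_option \<sigma> \<circ> s)(v:=None)) (map_par \<sigma> \<phi>))" by (simp only: h)
  also have "\<dots> = inst (map_option \<sigma> \<circ> s) (map_par \<sigma> (Ex v \<phi>))" by (simp only: inst.simps map_par.simps)
  finally show ?case .
qed (simp_all add: map_par_trm_inst)

lemma map_par_trm_cong: "\<forall>a\<in>pars_trm t. \<sigma> a = \<tau> a \<Longrightarrow> map_par_trm \<sigma> t = map_par_trm \<tau> t"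
  by (induction t) auto

lemma map_par_cong: "\<forall>a\<in>pars \<phi>. \<sigma> a = \<tau> a \<Longrightarrow> map_par \<sigma> \<phi> = map_par \<tau> \<phi>"
  by (induction \<phi>) (auto intro: map_par_trm_cong)

lemma map_par_trm_id: "map_par_trm (\<lambda>a. a) t = t"
proof (induction t)
  case (Fn f ts)
  have "map (map_par_trm (\<lambda>a. a)) ts = ts" using Fn by (intro map_idI)
  then show ?case by simp
qed simp_all

lemma map_par_id: "map_par (\<lambda>a. a) \<phi> = \<phi>"
  by (induction \<phi>) (auto simp: map_par_trm_id map_idI)

lemma map_par_fix: "\<forall>a\<in>pars \<phi>. \<sigma> a = a \<Longrightarrow> map_par \<sigma> \<phi> = \<phi>"
  using map_par_cong[of \<phi> \<sigma> "\<lambda>a. a"] map_par_id by auto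

lemma map_par_trm_comp: "map_par_trm \<sigma> (map_par_trm \<tau> t) = map_par_trm (\<lambda>a. \<sigma> (\<tau> a)) t"
  by (induction t) auto

lemma map_par_comp: "map_par \<sigma> (map_par \<tau> \<phi>) = map_par (\<lambda>a. \<sigma> (\<tau> a)) \<phi>"
  by (induction \<phi>) (auto simp: map_par_trm_comp)

lemma pars_map_par_trm: "pars_trm (map_par_trm \<sigma> t) = \<sigma> ` pars_trm t"
  by (induction t) auto

lemma pars_map_par: "pars (map_par \<sigma> \<phi>) = \<sigma> ` pars \<phi>"
  by (induction \<phi>) (auto simp: pars_map_par_trm image_Union)

lemma fv_map_par_trm: "fv_trm (map_par_trm \<sigma> t) = fv_trm t"
  by (induction t) auto

lemma fv_map_par: "fv (map_par \<sigma> \<phi>) = fv \<phi>"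
  by (induction \<phi>) (auto simp: fv_map_par_trm)

lemma wf_map_par_trm: "wf_trm ar_f (map_par_trm \<sigma> t) = wf_trm ar_f t"
  by (induction t) (auto simp: list_all_iff)

lemma wf_map_par: "wf_fm ar_f ar_r (map_par \<sigma> \<phi>) = wf_fm ar_f ar_r \<phi>"
  by (induction \<phi>) (auto simp: wf_map_par_trm)




section \<open>Ultrafilter-like families\<close>

definition fipI :: "'i set \<Rightarrow> 'i set set \<Rightarrow> bool" where
  "fipI I U \<longleftrightarrow> (\<forall>F. finite F \<and> F \<subseteq> U \<longrightarrow> I \<inter> \<Inter>F \<noteq> {})"

lemma chain_finite_bound:
  assumes "finite F" "F \<subseteq> \<Union>C" "C \<noteq> {}" "chain\<^sub>\<subseteq> C"
  shows "\<exists>U\<in>C. F \<subseteq> U"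
  using assms
proof (induction F rule: finite_induct)
  case empty then show ?case by auto
next
  case (insert x F)
  have "F \<subseteq> \<Union>C" "x \<in> \<Union>C" using insert.prems by auto
  then obtain U where U: "U \<in> C" "F \<subseteq> U" using insert.IH insert.prems by blast
  from \<open>x \<in> \<Union>C\<close> obtain V where V: "V \<in> C" "x \<in> V" by blast
  from insert.prems(3) U V have "U \<subseteq> V \<or> V \<subseteq> U" unfolding chain_subset_def by blast
  then show ?case
  proof
    assume "U \<subseteq> V" then show ?case using U V by blast
  next
    assume "V \<subseteq> U" then show ?case using U V by blast
  qed
qed

lemma ultra_exists:
  assumes "B \<subseteq> Pow I" "fipI I B"
  shows "\<exists>U. B \<subseteq> U \<and> U \<subseteq> Pow I \<and> fipI I U \<and> (\<forall>X\<subseteq>I. X \<in> U \<or> I - X \<in> U)"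
proof -
  let ?A = "{U. B \<subseteq> U \<and> U \<subseteq> Pow I \<and> fipI I U}"
  have "\<forall>C\<in>chains ?A. \<exists>U\<in>?A. \<forall>X\<in>C. X \<subseteq> U"
  proof
    fix C assume C: "C \<in> chains ?A"
    show "\<exists>U\<in>?A. \<forall>X\<in>C. X \<subseteq> U"
    proof (cases "C = {}")
      case True
      have "B \<in> ?A" using assms by blast
      then show ?thesis using True by blast
    next
      case False
      have "\<Union>C \<in> ?A"
      proof -
        obtain X0 where "X0 \<in> C" using False by auto
        then have "B \<subseteq> \<Union>C" using C unfolding chains_def by blast
        moreover have "\<Union>C \<subseteq> Pow I" using C unfolding chains_def by auto
        moreover have "fipI I (\<Union>C)" unfolding fipI_def
        proof (intro allI impI)
          fix F assume F: "finite F \<and> F \<subseteq> \<Union>C"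
          then obtain U where "U \<in> C" "F \<subseteq> U"
            using chain_finite_bound[of F C] False C unfolding chains_def by auto
          moreover have "fipI I U" using C \<open>U \<in> C\<close> unfolding chains_def by blast
          ultimately show "I \<inter> \<Inter>F \<noteq> {}" using F unfolding fipI_def by blast
        qed
        ultimately show ?thesis by auto
      qed
      then show ?thesis by auto
    qed
  qed
  then obtain U where U: "U \<in> ?A" and max: "\<forall>X\<in>?A. U \<subseteq> X \<longrightarrow> X = U"
    by (rule Zorn_Lemma2[THEN bexE]) auto
  have "\<forall>X\<subseteq>I. X \<in> U \<or> I - X \<in> U"
  proof (intro allI impI, rule ccontr)
    fix X assume X: "X \<subseteq> I" and n: "\<not> (X \<in> U \<or> I - X \<in> U)"
    have "\<not> fipI I (insert X U)"
    proof
      assume "fipI I (insert X U)"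
      then have h: "insert X U \<in> ?A" using U X by auto
      from max h have "U \<subseteq> insert X U \<longrightarrow> insert X U = U" by (rule bspec)
      then have "insert X U = U" by blast
      then show False using n by blast
    qed
    then obtain F1 where F1: "finite F1" "F1 \<subseteq> insert X U" "I \<inter> \<Inter>F1 = {}"
      unfolding fipI_def by auto
    have "\<not> fipI I (insert (I - X) U)"
    proof
      assume "fipI I (insert (I - X) U)"
      then have h: "insert (I - X) U \<in> ?A" using U X by auto
      from max h have "U \<subseteq> insert (I - X) U \<longrightarrow> insert (I - X) U = U" by (rule bspec)
      then have "insert (I - X) U = U" by blast
      then show False using n by blast
    qed
    then obtain F2 where F2: "finite F2" "F2 \<subseteq> insert (I - X) U" "I \<inter> \<Inter>F2 = {}"
      unfolding fipI_def by auto
    let ?F = "(F1 - {X}) \<union> (F2 - {I - X})"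
    have "finite ?F" "?F \<subseteq> U" using F1 F2 by auto
    then have "I \<inter> \<Inter>?F \<noteq> {}" using U unfolding fipI_def by auto
    then obtain i where i: "i \<in> I" "\<forall>Y\<in>?F. i \<in> Y" by auto
    show False
    proof (cases "i \<in> X")
      case True
      then have "i \<in> I \<inter> \<Inter>F1" using i by auto
      then show False using F1 by auto
    next
      case False
      then have "i \<in> I \<inter> \<Inter>F2" using i by auto
      then show False using F2 by auto
    qed
  qed
  then show ?thesis using U by auto
qed

lemma fipI_up:
  assumes "fipI I U" "\<forall>X\<subseteq>I. X \<in> U \<or> I - X \<in> U" "X \<in> U" "I \<inter> X \<subseteq> Y" "Y \<subseteq> I"
  shows "Y \<in> U"
proof (rule ccontr)
  assume "Y \<notin> U"
  then have "I - Y \<in> U" using assms by auto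
  moreover have "finite {X, I - Y}" by simp
  ultimately have "I \<inter> \<Inter>{X, I - Y} \<noteq> {}" using assms(1,3) unfolding fipI_def by blast
  then show False using assms(4) by auto
qed




section \<open>Abstraction of parameters\<close>

primrec abs_trm :: "('a \<Rightarrow> nat) \<Rightarrow> ('f, 'a) trm \<Rightarrow> ('f, 'a) trm" where
  "abs_trm g (Var i) = Var i"
| "abs_trm g (Par a) = Var (g a)"
| "abs_trm g (Fn f ts) = Fn f (map (abs_trm g) ts)"

primrec abstr :: "('a \<Rightarrow> nat) \<Rightarrow> ('f, 'r, 'a) fm \<Rightarrow> ('f, 'r, 'a) fm" where
  "abstr g FF = FF"
| "abstr g (Rel r ts) = Rel r (map (abs_trm g) ts)"
| "abstr g (Eq t u) = Eq (abs_trm g t) (abs_trm g u)"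
| "abstr g (Neg \<phi>) = Neg (abstr g \<phi>)"
| "abstr g (Conj \<phi> \<psi>) = Conj (abstr g \<phi>) (abstr g \<psi>)"
| "abstr g (Ex v \<phi>) = Ex v (abstr g \<phi>)"

primrec bv :: "('f, 'r, 'a) fm \<Rightarrow> nat set" where
  "bv FF = {}"
| "bv (Rel r ts) = {}"
| "bv (Eq t u) = {}"
| "bv (Neg \<phi>) = bv \<phi>"
| "bv (Conj \<phi> \<psi>) = bv \<phi> \<union> bv \<psi>"
| "bv (Ex v \<phi>) = insert v (bv \<phi>)"

lemma finite_bv: "finite (bv \<phi>)"
  by (induction \<phi>) auto

lemma finite_pars_trm: "finite (pars_trm t)"
  by (induction t) auto

lemma finite_pars: "finite (pars \<phi>)"
  by (induction \<phi>) (auto simp: finite_pars_trm)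

lemma inst_abs_trm:
  "(\<forall>a\<in>pars_trm t. s (g a) = Some a) \<Longrightarrow> (\<forall>i\<in>fv_trm t. s i = None) \<Longrightarrow> inst_trm s (abs_trm g t) = t"
proof (induction t)
  case (Fn f ts)
  have "map (inst_trm s \<circ> abs_trm g) ts = ts" using Fn by (intro map_idI) auto
  then show ?case by simp
qed auto

lemma inst_abstr:
  "(\<forall>a\<in>pars \<phi>. s (g a) = Some a \<and> g a \<notin> bv \<phi>) \<Longrightarrow> (\<forall>i\<in>fv \<phi>. s i = None) \<Longrightarrow> inst s (abstr g \<phi>) = \<phi>"
proof (induction \<phi> arbitrary: s)
  case (Rel r ts)
  have "\<forall>x\<in>set ts. inst_trm s (abs_trm g x) = x" using Rel.prems by (simp add: inst_abs_trm)
  then have "map (inst_trm s \<circ> abs_trm g) ts = ts" by (intro map_idI) auto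
  then show ?case by simp
next
  case (Eq t u) then show ?case by (simp add: inst_abs_trm)
next
  case (Ex v \<phi>)
  have "inst (s(v:=None)) (abstr g \<phi>) = \<phi>" using Ex.prems by (intro Ex.IH) auto
  then show ?case by simp
qed auto

lemma fv_abs_trm: "fv_trm (abs_trm g t) \<subseteq> fv_trm t \<union> g ` pars_trm t"
proof (induction t)
  case (Fn f ts)
  show ?case
  proof
    fix x assume "x \<in> fv_trm (abs_trm g (Fn f ts))"
    then obtain t where t: "t \<in> set ts" "x \<in> fv_trm (abs_trm g t)" by auto
    then show "x \<in> fv_trm (Fn f ts) \<union> g ` pars_trm (Fn f ts)" using Fn[OF t(1)] by auto
  qed
qed auto

lemma fv_abstr: "fv (abstr g \<phi>) \<subseteq> fv \<phi> \<union> g ` pars \<phi>"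
proof (induction \<phi>)
  case (Rel r ts)
  show ?case
  proof
    fix x assume "x \<in> fv (abstr g (Rel r ts))"
    then obtain t where t: "t \<in> set ts" "x \<in> fv_trm (abs_trm g t)" by auto
    then show "x \<in> fv (Rel r ts) \<union> g ` pars (Rel r ts)" using fv_abs_trm[of g t] by auto
  qed
next
  case (Eq t u) then show ?case using fv_abs_trm[of g t] fv_abs_trm[of g u] by auto
qed auto

lemma pars_abs_trm: "pars_trm (abs_trm g t) = {}"
  by (induction t) auto

lemma pars_abstr: "pars (abstr g \<phi>) = {}"
  by (induction \<phi>) (auto simp: pars_abs_trm)

lemma wf_abs_trm: "wf_trm ar_f (abs_trm g t) = wf_trm ar_f t"
  by (induction t) (auto simp: list_all_iff)

lemma wf_abstr: "wf_fm ar_f ar_r (abstr g \<phi>) = wf_fm ar_f ar_r \<phi>"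
  by (induction \<phi>) (auto simp: wf_abs_trm)

lemma phi_inst_props:
  assumes "L_fm ar_f ar_r \<phi>" "fv \<phi> \<subseteq> {..<n + k}"
  shows "wf_fm ar_f ar_r (phi_inst \<phi> n k m)" "fv (phi_inst \<phi> n k m) \<subseteq> {..<n}"
    "pars (phi_inst \<phi> n k m) \<subseteq> m ` {..<k}"
proof -
  show "wf_fm ar_f ar_r (phi_inst \<phi> n k m)" using assms unfolding phi_inst_def fm_over_def by (simp add: wf_inst)
  show "fv (phi_inst \<phi> n k m) \<subseteq> {..<n}" using assms unfolding phi_inst_def by (auto simp: fv_inst)
  have "pars (phi_inst \<phi> n k m) \<subseteq> pars \<phi> \<union> {a. \<exists>i. (if n \<le> i \<and> i < n + k then Some (m (i - n)) else None) = Some a}"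
    unfolding phi_inst_def by (rule pars_inst)
  also have "\<dots> \<subseteq> m ` {..<k}" using assms(1) unfolding fm_over_def
    by (auto split: if_splits)
  finally show "pars (phi_inst \<phi> n k m) \<subseteq> m ` {..<k}" .
qed

lemma represent:
  fixes \<psi> :: "('f, 'r, 'a) fm" and D :: "'a set"
  assumes "fm_over ar_f ar_r D \<psi>" "fv \<psi> \<subseteq> {..<n}" "d \<in> D"
  shows "\<exists>\<phi> k m. L_fm ar_f ar_r \<phi> \<and> fv \<phi> \<subseteq> {..<n + k} \<and> (\<forall>i<k. m i \<in> D) \<and> phi_inst \<phi> n k m = \<psi>"
proof -
  have "\<exists>(c::nat) h. pars \<psi> = h ` {i. i < c} \<and> inj_on h {i. i < c}"
    by (rule finite_imp_nat_seg_image_inj_on[OF finite_pars])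
  then obtain c :: nat and h :: "nat \<Rightarrow> 'a" where ch: "pars \<psi> = h ` {i. i < c}" "inj_on h {i. i < c}"
    by (elim exE conjE)
  define B where "B = Suc (Max (insert 0 (bv \<psi>)))"
  have bvB: "v < B" if "v \<in> bv \<psi>" for v
  proof -
    have "v \<le> Max (insert 0 (bv \<psi>))" using that finite_bv by (intro Max_ge) auto
    then show ?thesis unfolding B_def by linarith
  qed
  define idx where "idx a = inv_into {i. i < c} h a" for a
  define g where "g a = n + B + idx a" for a
  define k where "k = B + c"
  define m where "m j = (if j < B then d else h (j - B))" for j
  define s where "s = (\<lambda>i. if n \<le> i \<and> i < n + k then Some (m (i - n)) else None)"
  have idx: "idx a < c" "h (idx a) = a" if a: "a \<in> pars \<psi>" for a
  proof -
    have "a \<in> h ` {i. i < c}" using a ch(1) by blast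
    then show "idx a < c" "h (idx a) = a" unfolding idx_def
      using inv_into_into[of a h "{i. i < c}"] f_inv_into_f[of a h "{i. i < c}"] by auto
  qed
  have ga: "s (g a) = Some a \<and> g a \<notin> bv \<psi>" if a: "a \<in> pars \<psi>" for a
  proof -
    have 1: "n \<le> g a" "g a < n + k" using idx(1)[OF a] unfolding g_def k_def by auto
    have 2: "g a - n = B + idx a" unfolding g_def by simp
    have 3: "m (B + idx a) = a" unfolding m_def using idx(2)[OF a] by simp
    have "s (g a) = Some a" unfolding s_def using 1 2 3 by simp
    moreover have "g a \<notin> bv \<psi>" using bvB unfolding g_def by fastforce
    ultimately show ?thesis by blast
  qed
  have fvs: "\<forall>i\<in>fv \<psi>. s i = None" using assms(2) unfolding s_def by auto
  have eq: "phi_inst (abstr g \<psi>) n k m = \<psi>"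
    unfolding phi_inst_def s_def[symmetric] using ga fvs by (intro inst_abstr) blast+
  have "fv (abstr g \<psi>) \<subseteq> {..<n + k}"
  proof -
    have "g ` pars \<psi> \<subseteq> {..<n + k}"
    proof
      fix x assume "x \<in> g ` pars \<psi>"
      then obtain a where a: "a \<in> pars \<psi>" "x = g a" by auto
      have "idx a < c" using idx a by blast
      then show "x \<in> {..<n + k}" using a unfolding g_def k_def by auto
    qed
    moreover have "fv \<psi> \<subseteq> {..<n + k}" using assms(2) by auto
    ultimately show ?thesis using fv_abstr[of g \<psi>] by blast
  qed
  moreover have "L_fm ar_f ar_r (abstr g \<psi>)" using assms(1) unfolding fm_over_def
    by (simp add: wf_abstr pars_abstr)
  moreover have "\<forall>i<k. m i \<in> D"
  proof (intro allI impI)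
    fix i assume "i < k"
    show "m i \<in> D"
    proof (cases "i < B")
      case True then show ?thesis using assms(3) unfolding m_def by simp
    next
      case False
      then have "i - B < c" using \<open>i < k\<close> unfolding k_def by auto
      then have "h (i - B) \<in> pars \<psi>" using ch by auto
      then show ?thesis using assms(1) False unfolding m_def fm_over_def by auto
    qed
  qed
  ultimately show ?thesis using eq by blast
qed




definition conjs :: "('f, 'r, 'a) fm list \<Rightarrow> ('f, 'r, 'a) fm" where
  "conjs xs = foldr Conj xs (Neg FF)"

lemma sat_conjs: "sat M e (conjs xs) \<longleftrightarrow> (\<forall>\<psi>\<in>set xs. sat M e \<psi>)"
  by (induction xs) (auto simp: conjs_def)

lemma fv_conjs: "fv (conjs xs) = (\<Union>\<psi>\<in>set xs. fv \<psi>)"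
  by (induction xs) (auto simp: conjs_def)

lemma pars_conjs: "pars (conjs xs) = (\<Union>\<psi>\<in>set xs. pars \<psi>)"
  by (induction xs) (auto simp: conjs_def)

lemma wf_conjs: "wf_fm ar_f ar_r (conjs xs) \<longleftrightarrow> (\<forall>\<psi>\<in>set xs. wf_fm ar_f ar_r \<psi>)"
  by (induction xs) (auto simp: conjs_def)

definition Imp :: "('f, 'r, 'a) fm \<Rightarrow> ('f, 'r, 'a) fm \<Rightarrow> ('f, 'r, 'a) fm" where
  "Imp a b = Neg (Conj a (Neg b))"

lemma sat_Imp: "sat M e (Imp a b) \<longleftrightarrow> (sat M e a \<longrightarrow> sat M e b)"
  by (simp add: Imp_def)

lemma finsat_mono: "finsat N p \<Longrightarrow> p' \<subseteq> p \<Longrightarrow> finsat N p'"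
  unfolding finsat_def by (meson order_trans)

lemma aut_inv:
  assumes "is_struct ar_f N" "automorphism ar_f ar_r N \<sigma>"
  shows "automorphism ar_f ar_r N (inv_into (dom N) \<sigma>)"
proof -
  let ?s = "inv_into (dom N) \<sigma>"
  have bij: "bij_betw \<sigma> (dom N) (dom N)" using assms(2) unfolding automorphism_def by blast
  then have inj: "inj_on \<sigma> (dom N)" and surj: "\<sigma> ` dom N = dom N" by (auto simp: bij_betw_def)
  have inD: "?s x \<in> dom N" if "x \<in> dom N" for x using that surj by (metis inv_into_into)
  have bk: "\<sigma> (?s x) = x" if "x \<in> dom N" for x using that surj by (metis f_inv_into_f)
  have ys: "set (map ?s xs) \<subseteq> dom N" "map \<sigma> (map ?s xs) = xs" if "set xs \<subseteq> dom N" for xs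
    using that inD bk by (auto simp: map_idI subset_iff)
  have "bij_betw ?s (dom N) (dom N)" using bij by (metis bij_betw_inv_into)
  moreover have "\<forall>f xs. length xs = ar_f f \<and> set xs \<subseteq> dom N \<longrightarrow> ?s (fint N f xs) = fint N f (map ?s xs)"
  proof (intro allI impI)
    fix f xs assume h: "length xs = ar_f f \<and> set xs \<subseteq> dom N"
    let ?ys = "map ?s xs"
    have 1: "length ?ys = ar_f f" "set ?ys \<subseteq> dom N" using h ys by auto
    then have "\<sigma> (fint N f ?ys) = fint N f (map \<sigma> ?ys)" using assms(2) unfolding automorphism_def by blast
    then have 2: "\<sigma> (fint N f ?ys) = fint N f xs" using ys h by simp
    have 3: "fint N f ?ys \<in> dom N" using assms(1) 1 unfolding is_struct_def by blast
    have "?s (\<sigma> (fint N f ?ys)) = fint N f ?ys" using inv_into_f_f[OF inj 3] .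
    then show "?s (fint N f xs) = fint N f ?ys" using 2 by simp
  qed
  moreover have "\<forall>r xs. length xs = ar_r r \<and> set xs \<subseteq> dom N \<longrightarrow> (rint N r (map ?s xs) \<longleftrightarrow> rint N r xs)"
  proof (intro allI impI)
    fix r xs assume h: "length xs = ar_r r \<and> set xs \<subseteq> dom N"
    let ?ys = "map ?s xs"
    have 1: "length ?ys = ar_r r" "set ?ys \<subseteq> dom N" using h ys by auto
    then have "rint N r (map \<sigma> ?ys) \<longleftrightarrow> rint N r ?ys" using assms(2) unfolding automorphism_def by blast
    then show "rint N r ?ys \<longleftrightarrow> rint N r xs" using ys h by simp
  qed
  ultimately show ?thesis unfolding automorphism_def by blast
qed

lemma aut_inv_fix:
  assumes "automorphism ar_f ar_r N \<sigma>" "a \<in> dom N" "\<sigma> a = a"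
  shows "inv_into (dom N) \<sigma> a = a"
proof -
  have "inj_on \<sigma> (dom N)" using assms(1) unfolding automorphism_def bij_betw_def by blast
  then show ?thesis using inv_into_f_f[of \<sigma> "dom N" a] assms by simp
qed

lemma aut_in:
  assumes "automorphism ar_f ar_r N \<sigma>" "a \<in> dom N"
  shows "\<sigma> a \<in> dom N"
  using assms unfolding automorphism_def bij_betw_def by blast

lemma invariant_intro:
  assumes "is_struct ar_f N" "A \<subseteq> dom N" "\<forall>\<psi>\<in>S. pars \<psi> \<subseteq> dom N"
    and "\<And>\<sigma>. automorphism ar_f ar_r N \<sigma> \<Longrightarrow> \<forall>a\<in>A. \<sigma> a = a \<Longrightarrow> map_par \<sigma> ` S \<subseteq> S"
  shows "invariant ar_f ar_r N A S"
  unfolding invariant_def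
proof (intro allI impI)
  fix \<sigma> assume h: "automorphism ar_f ar_r N \<sigma> \<and> (\<forall>a\<in>A. \<sigma> a = a)"
  let ?s = "inv_into (dom N) \<sigma>"
  have au: "automorphism ar_f ar_r N \<sigma>" and fx: "\<forall>a\<in>A. \<sigma> a = a" using h by auto
  have "automorphism ar_f ar_r N ?s" by (rule aut_inv[OF assms(1) au])
  moreover have "\<forall>a\<in>A. ?s a = a"
  proof
    fix a assume "a \<in> A"
    then show "?s a = a" using aut_inv_fix[OF au] assms(2) fx by (meson subsetD)
  qed
  ultimately have s: "map_par ?s ` S \<subseteq> S" by (rule assms(4))
  have surj: "\<sigma> ` dom N = dom N" using h unfolding automorphism_def bij_betw_def by blast
  have "S \<subseteq> map_par \<sigma> ` S"
  proof
    fix \<psi> assume "\<psi> \<in> S"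
    then have p: "pars \<psi> \<subseteq> dom N" using assms(3) by blast
    have "map_par \<sigma> (map_par ?s \<psi>) = map_par (\<lambda>a. \<sigma> (?s a)) \<psi>" by (rule map_par_comp)
    also have "\<dots> = \<psi>"
    proof (rule map_par_fix, rule ballI)
      fix a assume "a \<in> pars \<psi>"
      then have "a \<in> \<sigma> ` dom N" using p surj by blast
      then show "\<sigma> (?s a) = a" by (rule f_inv_into_f)
    qed
    finally have "\<psi> = map_par \<sigma> (map_par ?s \<psi>)" by simp
    moreover have "map_par ?s \<psi> \<in> S" using s \<open>\<psi> \<in> S\<close> by blast
    ultimately show "\<psi> \<in> map_par \<sigma> ` S" by blast
  qed
  moreover have "map_par \<sigma> ` S \<subseteq> S" by (rule assms(4)[OF au fx])
  ultimately show "map_par \<sigma> ` S = S" by blast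
qed

lemma map_par_phi_inst:
  assumes "pars \<phi> = {}"
  shows "map_par \<sigma> (phi_inst \<phi> n k m) = phi_inst \<phi> n k (\<lambda>i. \<sigma> (m i))"
proof -
  have "map_par \<sigma> \<phi> = \<phi>" using assms by (intro map_par_fix) simp
  moreover have "map_option \<sigma> \<circ> (\<lambda>i. if n \<le> i \<and> i < n + k then Some (m (i - n)) else None)
     = (\<lambda>i. if n \<le> i \<and> i < n + k then Some (\<sigma> (m (i - n))) else None)" by (auto simp: fun_eq_iff)
  ultimately show ?thesis unfolding phi_inst_def by (simp only: map_par_inst)
qed




lemma fm_over_Neg: "fm_over ar_f ar_r B (Neg \<psi>) = fm_over ar_f ar_r B \<psi>"
  unfolding fm_over_def by simp

lemma dir21:
  fixes N M :: "('f, 'r, 'a) struct" and \<chi> \<phi> :: "('f, 'r, 'a) fm"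
  assumes ii: "\<And>n q. complete_type ar_f ar_r M A n q \<Longrightarrow>
               (\<exists>p. complete_type ar_f ar_r N (dom N) n p \<and> q \<subseteq> p \<and> invariant ar_f ar_r N A p)"
    and chi: "fm_over ar_f ar_r A \<chi>" "fv \<chi> \<subseteq> {..<n}" "\<forall>i. e i \<in> dom M" "sat M e \<chi>"
    and phi: "L_fm ar_f ar_r \<phi>" "fv \<phi> \<subseteq> {..<n + k}"
    and N: "is_struct ar_f N" "A \<subseteq> dom N"
  shows "\<exists>p. phi_type N n k \<phi> p \<and> invariant ar_f ar_r N A p \<and> finsat N (insert \<chi> p)"
proof -
  define q where "q = {\<psi>. fm_over ar_f ar_r A \<psi> \<and> fv \<psi> \<subseteq> {..<n} \<and> sat M e \<psi>}"
  have "complete_type ar_f ar_r M A n q"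
    unfolding complete_type_def
  proof (intro conjI)
    show "\<forall>\<phi>\<in>q. fm_over ar_f ar_r A \<phi> \<and> fv \<phi> \<subseteq> {..<n}" unfolding q_def by blast
    show "finsat M q" unfolding finsat_def q_def using chi(3) by blast
    show "\<forall>\<phi>. fm_over ar_f ar_r A \<phi> \<and> fv \<phi> \<subseteq> {..<n} \<longrightarrow> \<phi> \<in> q \<or> Neg \<phi> \<in> q"
      unfolding q_def by (auto simp: fm_over_Neg)
  qed
  then obtain p where p: "complete_type ar_f ar_r N (dom N) n p" "q \<subseteq> p" "invariant ar_f ar_r N A p"
    using ii by blast
  define PhiF where "PhiF = {\<psi>. \<exists>m. (\<forall>i<k. m i \<in> dom N) \<and> (\<psi> = phi_inst \<phi> n k m \<or> \<psi> = Neg (phi_inst \<phi> n k m))}"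
  define p' where "p' = p \<inter> PhiF"
  have pfm: "\<forall>\<psi>\<in>p. fm_over ar_f ar_r (dom N) \<psi> \<and> fv \<psi> \<subseteq> {..<n}"
    and pfs: "finsat N p"
    and pc: "\<And>\<psi>. fm_over ar_f ar_r (dom N) \<psi> \<Longrightarrow> fv \<psi> \<subseteq> {..<n} \<Longrightarrow> \<psi> \<in> p \<or> Neg \<psi> \<in> p"
    using p(1) unfolding complete_type_def by blast+
  have chip: "\<chi> \<in> p" using p(2) chi unfolding q_def by blast
  have "phi_type N n k \<phi> p'"
    unfolding phi_type_def
  proof (intro conjI)
    show "p' \<subseteq> {\<psi>. \<exists>m. (\<forall>i<k. m i \<in> dom N) \<and> (\<psi> = phi_inst \<phi> n k m \<or> \<psi> = Neg (phi_inst \<phi> n k m))}"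
      unfolding p'_def PhiF_def by blast
    show "finsat N p'" using pfs finsat_mono unfolding p'_def by blast
    show "\<forall>m. (\<forall>i<k. m i \<in> dom N) \<longrightarrow> phi_inst \<phi> n k m \<in> p' \<or> Neg (phi_inst \<phi> n k m) \<in> p'"
    proof (intro allI impI)
      fix m assume m: "\<forall>i<k. m i \<in> dom N"
      have "fm_over ar_f ar_r (dom N) (phi_inst \<phi> n k m)"
        using phi_inst_props[OF phi] m unfolding fm_over_def by blast
      moreover have "fv (phi_inst \<phi> n k m) \<subseteq> {..<n}" using phi_inst_props[OF phi] by blast
      ultimately have "phi_inst \<phi> n k m \<in> p \<or> Neg (phi_inst \<phi> n k m) \<in> p" by (rule pc)
      moreover have "phi_inst \<phi> n k m \<in> PhiF" "Neg (phi_inst \<phi> n k m) \<in> PhiF"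
        unfolding PhiF_def using m by blast+
      ultimately show "phi_inst \<phi> n k m \<in> p' \<or> Neg (phi_inst \<phi> n k m) \<in> p'"
        unfolding p'_def by blast
    qed
  qed
  moreover have "invariant ar_f ar_r N A p'"
  proof (rule invariant_intro[OF N])
    show "\<forall>\<psi>\<in>p'. pars \<psi> \<subseteq> dom N" using pfm unfolding p'_def fm_over_def by blast
    fix \<sigma> assume au: "automorphism ar_f ar_r N \<sigma>" and fx: "\<forall>a\<in>A. \<sigma> a = a"
    have pinv: "map_par \<sigma> ` p = p" using p(3) au fx unfolding invariant_def by blast
    have pars0: "pars \<phi> = {}" using phi(1) unfolding fm_over_def by blast
    show "map_par \<sigma> ` p' \<subseteq> p'"
    proof
      fix \<psi>' assume "\<psi>' \<in> map_par \<sigma> ` p'"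
      then obtain \<psi> where \<psi>: "\<psi> \<in> p" "\<psi> \<in> PhiF" "\<psi>' = map_par \<sigma> \<psi>" unfolding p'_def by blast
      have "\<psi>' \<in> p" using \<psi> pinv by blast
      moreover have "\<psi>' \<in> PhiF"
      proof -
        obtain m where m: "\<forall>i<k. m i \<in> dom N" "\<psi> = phi_inst \<phi> n k m \<or> \<psi> = Neg (phi_inst \<phi> n k m)"
          using \<psi>(2) unfolding PhiF_def by blast
        have m': "\<forall>i<k. \<sigma> (m i) \<in> dom N" using m(1) aut_in[OF au] by blast
        have e: "map_par \<sigma> (phi_inst \<phi> n k m) = phi_inst \<phi> n k (\<lambda>i. \<sigma> (m i))"
          by (rule map_par_phi_inst[OF pars0])
        from m(2) show ?thesis
        proof
          assume "\<psi> = phi_inst \<phi> n k m"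
          then have "\<psi>' = phi_inst \<phi> n k (\<lambda>i. \<sigma> (m i))" using \<psi>(3) e by simp
          then show ?thesis unfolding PhiF_def using m' by (intro CollectI exI[where x="\<lambda>i. \<sigma> (m i)"]) simp
        next
          assume "\<psi> = Neg (phi_inst \<phi> n k m)"
          then have "\<psi>' = Neg (phi_inst \<phi> n k (\<lambda>i. \<sigma> (m i)))" using \<psi>(3) e by simp
          then show ?thesis unfolding PhiF_def using m' by (intro CollectI exI[where x="\<lambda>i. \<sigma> (m i)"]) simp
        qed
      qed
      ultimately show "\<psi>' \<in> p'" unfolding p'_def by blast
    qed
  qed
  moreover have "insert \<chi> p' \<subseteq> p" using chip unfolding p'_def by blast
  then have "finsat N (insert \<chi> p')" by (rule finsat_mono[OF pfs])
  ultimately show ?thesis by blast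
qed




lemma sat_phi_inst:
  "sat M e (phi_inst \<phi> n k m) = sat M (\<lambda>i. if n \<le> i \<and> i < n + k then m (i - n) else e i) \<phi>"
proof -
  have "(\<lambda>i. case (if n \<le> i \<and> i < n + k then Some (m (i - n)) else None) of None \<Rightarrow> e i | Some a \<Rightarrow> a)
     = (\<lambda>i. if n \<le> i \<and> i < n + k then m (i - n) else e i)" by (auto simp: fun_eq_iff)
  then show ?thesis unfolding phi_inst_def sat_inst by simp
qed

definition code :: "nat \<Rightarrow> nat \<Rightarrow> nat \<Rightarrow> nat \<Rightarrow> (nat \<Rightarrow> 'a) \<Rightarrow> 'a \<Rightarrow> 'a \<Rightarrow> nat \<Rightarrow> 'a" where
  "code K j kl l m a b t = (if t < K then (if t < kl then m t else a) else if t = K + l then a else if t < K + j then b else a)"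

definition phistar :: "nat \<Rightarrow> nat \<Rightarrow> (('f, 'r, 'a) fm \<times> nat) list \<Rightarrow> ('f, 'r, 'a) fm" where
  "phistar n K ps = conjs (map (\<lambda>l. Imp (Eq (Var (n + K + l)) (Var (n + K + length ps))) (fst (ps ! l))) [0..<length ps])"

lemma code_sem:
  fixes ps :: "(('f, 'r, 'a) fm \<times> nat) list"
  assumes l: "l < length ps" and kl: "snd (ps ! l) \<le> K" and fvl: "fv (fst (ps ! l)) \<subseteq> {..<n + snd (ps ! l)}"
    and ab: "a \<noteq> b"
  shows "sat N e (phi_inst (phistar n K ps) n (K + length ps + 1) (code K (length ps) (snd (ps ! l)) l m a b))
     \<longleftrightarrow> sat N e (phi_inst (fst (ps ! l)) n (snd (ps ! l)) m)"
proof -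
  let ?j = "length ps"
  let ?c = "code K ?j (snd (ps ! l)) l m a b"
  define e' where "e' = (\<lambda>i. if n \<le> i \<and> i < n + (K + ?j + 1) then ?c (i - n) else e i)"
  define e'' where "e'' = (\<lambda>i. if n \<le> i \<and> i < n + snd (ps ! l) then m (i - n) else e i)"
  have ew: "e' (n + K + ?j) = a" unfolding e'_def code_def by simp
  have et: "e' (n + K + l') = (if l' = l then a else b)" if "l' < ?j" for l'
    using that l unfolding e'_def code_def by auto
  have "sat N e (phi_inst (phistar n K ps) n (K + ?j + 1) ?c) = sat N e' (phistar n K ps)"
    unfolding sat_phi_inst e'_def ..
  also have "\<dots> = (\<forall>l'<?j. e' (n + K + l') = e' (n + K + ?j) \<longrightarrow> sat N e' (fst (ps ! l')))"
    unfolding phistar_def sat_conjs by (auto simp: sat_Imp)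
  also have "\<dots> = sat N e' (fst (ps ! l))"
    using ew et ab l by auto
  also have "\<dots> = sat N e'' (fst (ps ! l))"
  proof (rule sat_fv, rule ballI)
    fix i assume "i \<in> fv (fst (ps ! l))"
    then have "i < n + snd (ps ! l)" using fvl by blast
    then show "e' i = e'' i" unfolding e'_def e''_def code_def using kl by auto
  qed
  also have "\<dots> = sat N e (phi_inst (fst (ps ! l)) n (snd (ps ! l)) m)"
    unfolding sat_phi_inst e''_def ..
  finally show ?thesis .
qed




definition goodS :: "('f \<Rightarrow> nat) \<Rightarrow> ('r \<Rightarrow> nat) \<Rightarrow> ('f, 'r, 'a) struct \<Rightarrow> 'a set \<Rightarrow> nat
    \<Rightarrow> (('f, 'r, 'a) fm \<times> nat) set \<Rightarrow> ('f, 'r, 'a) fm set \<Rightarrow> ('f, 'r, 'a) fm set \<Rightarrow> bool" where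
  "goodS ar_f ar_r N A n \<Phi> Q S \<longleftrightarrow> (\<forall>\<psi>\<in>S. pars \<psi> \<subseteq> dom N) \<and>
     (\<forall>\<phi> k m. (\<phi>, k) \<in> \<Phi> \<and> (\<forall>i<k. m i \<in> dom N) \<longrightarrow> phi_inst \<phi> n k m \<in> S \<or> Neg (phi_inst \<phi> n k m) \<in> S) \<and>
     finsat N (S \<union> Q) \<and>
     (\<forall>\<sigma>. automorphism ar_f ar_r N \<sigma> \<and> (\<forall>a\<in>A. \<sigma> a = a) \<longrightarrow> map_par \<sigma> ` S \<subseteq> S)"

lemma code_in: "(\<forall>t<kl. m t \<in> D) \<Longrightarrow> a \<in> D \<Longrightarrow> b \<in> D \<Longrightarrow> code K j kl l m a b t \<in> D"
  unfolding code_def by auto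

lemma code_comp: "(\<lambda>t. \<sigma> (code K j kl l m a b t)) = code K j kl l (\<lambda>t. \<sigma> (m t)) (\<sigma> a) (\<sigma> b)"
  unfolding code_def by (auto simp: fun_eq_iff)

lemma good_triv:
  fixes N :: "('f, 'r, 'a) struct" and \<Phi> :: "(('f, 'r, 'a) fm \<times> nat) set"
  assumes triv: "\<forall>a\<in>dom N. \<forall>b\<in>dom N. a = b"
    and e0: "\<forall>i. e0 i \<in> dom N" "\<forall>\<psi>\<in>Q. sat N e0 \<psi>"
    and Phi: "\<And>\<phi> k. (\<phi>, k) \<in> \<Phi> \<Longrightarrow> L_fm ar_f ar_r \<phi> \<and> fv \<phi> \<subseteq> {..<n + k}"
  shows "\<exists>S. goodS ar_f ar_r N A n \<Phi> Q S"
proof -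
  define S where "S = {\<psi>. (\<exists>\<phi> k m. (\<phi>, k) \<in> \<Phi> \<and> (\<forall>i<k. m i \<in> dom N) \<and>
      (\<psi> = phi_inst \<phi> n k m \<or> \<psi> = Neg (phi_inst \<phi> n k m))) \<and> sat N e0 \<psi>}"
  have pa: "\<forall>\<psi>\<in>S. pars \<psi> \<subseteq> dom N"
  proof
    fix \<psi> assume "\<psi> \<in> S"
    then obtain \<phi> k m where h: "(\<phi>, k) \<in> \<Phi>" "\<forall>i<k. m i \<in> dom N"
       "\<psi> = phi_inst \<phi> n k m \<or> \<psi> = Neg (phi_inst \<phi> n k m)" unfolding S_def by blast
    have pp: "L_fm ar_f ar_r \<phi>" "fv \<phi> \<subseteq> {..<n + k}" using Phi[OF h(1)] by auto
    have "pars (phi_inst \<phi> n k m) \<subseteq> m ` {..<k}" by (rule phi_inst_props(3)[OF pp])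
    also have "\<dots> \<subseteq> dom N" using h(2) by auto
    finally show "pars \<psi> \<subseteq> dom N" using h(3) by auto
  qed
  have co: "\<forall>\<phi> k m. (\<phi>, k) \<in> \<Phi> \<and> (\<forall>i<k. m i \<in> dom N) \<longrightarrow> phi_inst \<phi> n k m \<in> S \<or> Neg (phi_inst \<phi> n k m) \<in> S"
  proof (intro allI impI)
    fix \<phi> k m assume h: "(\<phi>, k) \<in> \<Phi> \<and> (\<forall>i<k. m i \<in> dom N)"
    show "phi_inst \<phi> n k m \<in> S \<or> Neg (phi_inst \<phi> n k m) \<in> S"
    proof (cases "sat N e0 (phi_inst \<phi> n k m)")
      case True
      then have "phi_inst \<phi> n k m \<in> S" unfolding S_def using h by blast
      then show ?thesis by blast
    next
      case False
      then have "Neg (phi_inst \<phi> n k m) \<in> S" unfolding S_def using h by auto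
      then show ?thesis by blast
    qed
  qed
  have fs: "finsat N (S \<union> Q)" unfolding finsat_def
  proof (intro allI impI)
    fix F assume "F \<subseteq> S \<union> Q \<and> finite F"
    then have "\<forall>\<psi>\<in>F. sat N e0 \<psi>" using e0(2) unfolding S_def by blast
    then show "\<exists>e. (\<forall>i. e i \<in> dom N) \<and> (\<forall>\<psi>\<in>F. sat N e \<psi>)" using e0(1) by blast
  qed
  have inv: "\<forall>\<sigma>. automorphism ar_f ar_r N \<sigma> \<and> (\<forall>a\<in>A. \<sigma> a = a) \<longrightarrow> map_par \<sigma> ` S \<subseteq> S"
  proof (intro allI impI subsetI)
    fix \<sigma> x assume h: "automorphism ar_f ar_r N \<sigma> \<and> (\<forall>a\<in>A. \<sigma> a = a)" and x: "x \<in> map_par \<sigma> ` S"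
    then obtain \<psi> where \<psi>: "\<psi> \<in> S" "x = map_par \<sigma> \<psi>" by blast
    have "\<forall>a\<in>pars \<psi>. \<sigma> a = a"
    proof
      fix a assume "a \<in> pars \<psi>"
      then have a: "a \<in> dom N" using pa \<psi>(1) by blast
      then have "\<sigma> a \<in> dom N" using aut_in[OF conjunct1[OF h]] by blast
      then show "\<sigma> a = a" using triv a by blast
    qed
    then have "x = \<psi>" using \<psi>(2) map_par_fix by metis
    then show "x \<in> S" using \<psi>(1) by simp
  qed
  show ?thesis unfolding goodS_def using pa co fs inv by blast
qed




lemma good_nontriv:
  fixes N :: "('f, 'r, 'a) struct" and ps :: "(('f, 'r, 'a) fm \<times> nat) list"
  assumes ab0: "a0 \<in> dom N" "b0 \<in> dom N" "a0 \<noteq> b0"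
    and Kle: "\<And>l. l < length ps \<Longrightarrow> snd (ps ! l) \<le> K"
    and Phi: "\<And>\<phi> k. (\<phi>, k) \<in> set ps \<Longrightarrow> L_fm ar_f ar_r \<phi> \<and> fv \<phi> \<subseteq> {..<n + k}"
    and P: "phi_type N n (K + length ps + 1) (phistar n K ps) P" "invariant ar_f ar_r N A P"
       "finsat N (insert \<chi> P)"
    and chiQ: "\<And>e. sat N e \<chi> \<Longrightarrow> \<forall>\<psi>\<in>Q. sat N e \<psi>"
  shows "\<exists>S. goodS ar_f ar_r N A n (set ps) Q S"
proof -
  let ?j = "length ps"
  let ?ks = "K + length ps + 1"
  let ?st = "phistar n K ps"
  define S where "S = {\<psi>. \<exists>l m a b. l < ?j \<and> (\<forall>t<snd (ps ! l). m t \<in> dom N) \<and> a \<in> dom N \<and> b \<in> dom N \<and> a \<noteq> b \<and>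
     ((\<psi> = phi_inst (fst (ps ! l)) n (snd (ps ! l)) m \<and> phi_inst ?st n ?ks (code K ?j (snd (ps ! l)) l m a b) \<in> P) \<or>
      (\<psi> = Neg (phi_inst (fst (ps ! l)) n (snd (ps ! l)) m) \<and> Neg (phi_inst ?st n ?ks (code K ?j (snd (ps ! l)) l m a b)) \<in> P))}"
  have Pl: "L_fm ar_f ar_r (fst (ps ! l)) \<and> fv (fst (ps ! l)) \<subseteq> {..<n + snd (ps ! l)}" if "l < ?j" for l
    using Phi[of "fst (ps ! l)" "snd (ps ! l)"] that by simp
  have pst: "pars ?st = {}"
  proof -
    have "\<forall>l\<in>set [0..<?j]. pars (fst (ps ! l)) = {}" using Pl unfolding fm_over_def by auto
    then show ?thesis unfolding phistar_def pars_conjs by (auto simp: Imp_def)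
  qed
  have pa: "\<forall>\<psi>\<in>S. pars \<psi> \<subseteq> dom N"
  proof
    fix \<psi> assume "\<psi> \<in> S"
    then obtain l m where h: "l < ?j" "\<forall>t<snd (ps ! l). m t \<in> dom N"
      "\<psi> = phi_inst (fst (ps ! l)) n (snd (ps ! l)) m \<or> \<psi> = Neg (phi_inst (fst (ps ! l)) n (snd (ps ! l)) m)"
      unfolding S_def by blast
    have pp: "L_fm ar_f ar_r (fst (ps ! l))" "fv (fst (ps ! l)) \<subseteq> {..<n + snd (ps ! l)}" using Pl[OF h(1)] by auto
    have "pars (phi_inst (fst (ps ! l)) n (snd (ps ! l)) m) \<subseteq> m ` {..<snd (ps ! l)}" by (rule phi_inst_props(3)[OF pp])
    also have "\<dots> \<subseteq> dom N" using h(2) by auto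
    finally show "pars \<psi> \<subseteq> dom N" using h(3) by auto
  qed
  have Pc: "\<forall>m. (\<forall>i<?ks. m i \<in> dom N) \<longrightarrow> phi_inst ?st n ?ks m \<in> P \<or> Neg (phi_inst ?st n ?ks m) \<in> P"
    using P(1) unfolding phi_type_def by blast
  have co: "\<forall>\<phi> k m. (\<phi>, k) \<in> set ps \<and> (\<forall>i<k. m i \<in> dom N) \<longrightarrow> phi_inst \<phi> n k m \<in> S \<or> Neg (phi_inst \<phi> n k m) \<in> S"
  proof (intro allI impI)
    fix \<phi> k m assume h: "(\<phi>, k) \<in> set ps \<and> (\<forall>i<k. m i \<in> dom N)"
    then obtain l where l: "l < ?j" "ps ! l = (\<phi>, k)" by (meson in_set_conv_nth)
    let ?c = "code K ?j k l m a0 b0"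
    have "\<forall>i<?ks. ?c i \<in> dom N" using h ab0 code_in by metis
    then have "phi_inst ?st n ?ks ?c \<in> P \<or> Neg (phi_inst ?st n ?ks ?c) \<in> P" using Pc by blast
    then show "phi_inst \<phi> n k m \<in> S \<or> Neg (phi_inst \<phi> n k m) \<in> S"
    proof
      assume "phi_inst ?st n ?ks ?c \<in> P"
      then have "phi_inst \<phi> n k m \<in> S" unfolding S_def using l h ab0
        by (intro CollectI exI[where x=l] exI[where x=m] exI[where x=a0] exI[where x=b0]) simp
      then show ?thesis by blast
    next
      assume "Neg (phi_inst ?st n ?ks ?c) \<in> P"
      then have "Neg (phi_inst \<phi> n k m) \<in> S" unfolding S_def using l h ab0
        by (intro CollectI exI[where x=l] exI[where x=m] exI[where x=a0] exI[where x=b0]) simp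
      then show ?thesis by blast
    qed
  qed
  have wit: "\<exists>w\<in>P. \<forall>e. sat N e w \<longrightarrow> sat N e \<psi>" if "\<psi> \<in> S" for \<psi>
  proof -
    from that obtain l m a b where h: "l < ?j" "a \<noteq> b"
      "(\<psi> = phi_inst (fst (ps ! l)) n (snd (ps ! l)) m \<and> phi_inst ?st n ?ks (code K ?j (snd (ps ! l)) l m a b) \<in> P) \<or>
       (\<psi> = Neg (phi_inst (fst (ps ! l)) n (snd (ps ! l)) m) \<and> Neg (phi_inst ?st n ?ks (code K ?j (snd (ps ! l)) l m a b)) \<in> P)"
      unfolding S_def by blast
    have sem: "sat N e (phi_inst ?st n ?ks (code K ?j (snd (ps ! l)) l m a b))
       \<longleftrightarrow> sat N e (phi_inst (fst (ps ! l)) n (snd (ps ! l)) m)" for e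
      using code_sem[OF h(1) Kle[OF h(1)] _ h(2)] Pl[OF h(1)] by blast
    from h(3) show ?thesis
    proof
      assume "\<psi> = phi_inst (fst (ps ! l)) n (snd (ps ! l)) m \<and> phi_inst ?st n ?ks (code K ?j (snd (ps ! l)) l m a b) \<in> P"
      then show ?thesis using sem by blast
    next
      assume "\<psi> = Neg (phi_inst (fst (ps ! l)) n (snd (ps ! l)) m) \<and> Neg (phi_inst ?st n ?ks (code K ?j (snd (ps ! l)) l m a b)) \<in> P"
      then show ?thesis using sem by (metis sat.simps(4))
    qed
  qed
  have fs: "finsat N (S \<union> Q)" unfolding finsat_def
  proof (intro allI impI)
    fix F assume F: "F \<subseteq> S \<union> Q \<and> finite F"
    have "\<forall>\<psi>\<in>F \<inter> S. \<exists>w. w \<in> P \<and> (\<forall>e. sat N e w \<longrightarrow> sat N e \<psi>)" using wit by blast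
    then obtain W where W: "\<forall>\<psi>\<in>F \<inter> S. W \<psi> \<in> P \<and> (\<forall>e. sat N e (W \<psi>) \<longrightarrow> sat N e \<psi>)"
      by (metis (no_types, lifting))
    let ?F' = "insert \<chi> (W ` (F \<inter> S))"
    have "?F' \<subseteq> insert \<chi> P" using W by blast
    moreover have "finite ?F'" using F by simp
    ultimately obtain e where e: "\<forall>i. e i \<in> dom N" "\<forall>\<psi>\<in>?F'. sat N e \<psi>"
      using P(3) unfolding finsat_def by blast
    have "\<forall>\<psi>\<in>F. sat N e \<psi>"
    proof
      fix \<psi> assume "\<psi> \<in> F"
      show "sat N e \<psi>"
      proof (cases "\<psi> \<in> S")
        case True
        then have "sat N e (W \<psi>)" using e(2) \<open>\<psi> \<in> F\<close> by blast
        then show ?thesis using W True \<open>\<psi> \<in> F\<close> by blast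
      next
        case False
        then have "\<psi> \<in> Q" using F \<open>\<psi> \<in> F\<close> by blast
        moreover have "sat N e \<chi>" using e(2) by blast
        ultimately show ?thesis using chiQ by blast
      qed
    qed
    then show "\<exists>e. (\<forall>i. e i \<in> dom N) \<and> (\<forall>\<psi>\<in>F. sat N e \<psi>)" using e(1) by blast
  qed
  have inv: "\<forall>\<sigma>. automorphism ar_f ar_r N \<sigma> \<and> (\<forall>a\<in>A. \<sigma> a = a) \<longrightarrow> map_par \<sigma> ` S \<subseteq> S"
  proof (intro allI impI subsetI)
    fix \<sigma> x assume hs: "automorphism ar_f ar_r N \<sigma> \<and> (\<forall>a\<in>A. \<sigma> a = a)" and x: "x \<in> map_par \<sigma> ` S"
    have au: "automorphism ar_f ar_r N \<sigma>" using hs by blast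
    have Pinv: "map_par \<sigma> ` P = P" using P(2) hs unfolding invariant_def by blast
    have inj: "inj_on \<sigma> (dom N)" using au unfolding automorphism_def bij_betw_def by blast
    obtain \<psi> where \<psi>: "\<psi> \<in> S" "x = map_par \<sigma> \<psi>" using x by blast
    then obtain l m a b where h: "l < ?j" "\<forall>t<snd (ps ! l). m t \<in> dom N" "a \<in> dom N" "b \<in> dom N" "a \<noteq> b"
      "(\<psi> = phi_inst (fst (ps ! l)) n (snd (ps ! l)) m \<and> phi_inst ?st n ?ks (code K ?j (snd (ps ! l)) l m a b) \<in> P) \<or>
       (\<psi> = Neg (phi_inst (fst (ps ! l)) n (snd (ps ! l)) m) \<and> Neg (phi_inst ?st n ?ks (code K ?j (snd (ps ! l)) l m a b)) \<in> P)"
      unfolding S_def by blast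
    let ?m = "\<lambda>t. \<sigma> (m t)"
    have h2: "\<forall>t<snd (ps ! l). ?m t \<in> dom N" using h(2) aut_in[OF au] by blast
    have h3: "\<sigma> a \<in> dom N" "\<sigma> b \<in> dom N" using h(3,4) aut_in[OF au] by blast+
    have h4: "\<sigma> a \<noteq> \<sigma> b" using inj h(3,4,5) by (meson inj_on_contraD)
    have p0: "pars (fst (ps ! l)) = {}" using Pl[OF h(1)] unfolding fm_over_def by blast
    have e1: "map_par \<sigma> (phi_inst (fst (ps ! l)) n (snd (ps ! l)) m) = phi_inst (fst (ps ! l)) n (snd (ps ! l)) ?m"
      by (rule map_par_phi_inst[OF p0])
    have e2: "map_par \<sigma> (phi_inst ?st n ?ks (code K ?j (snd (ps ! l)) l m a b))
       = phi_inst ?st n ?ks (code K ?j (snd (ps ! l)) l ?m (\<sigma> a) (\<sigma> b))"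
      using map_par_phi_inst[OF pst, of \<sigma> n ?ks "code K ?j (snd (ps ! l)) l m a b"] code_comp by metis
    from h(6) show "x \<in> S"
    proof
      assume hh: "\<psi> = phi_inst (fst (ps ! l)) n (snd (ps ! l)) m \<and> phi_inst ?st n ?ks (code K ?j (snd (ps ! l)) l m a b) \<in> P"
      then have 1: "x = phi_inst (fst (ps ! l)) n (snd (ps ! l)) ?m" using \<psi>(2) e1 by simp
      have "map_par \<sigma> (phi_inst ?st n ?ks (code K ?j (snd (ps ! l)) l m a b)) \<in> P" using hh Pinv by blast
      then have 2: "phi_inst ?st n ?ks (code K ?j (snd (ps ! l)) l ?m (\<sigma> a) (\<sigma> b)) \<in> P" using e2 by simp
      show "x \<in> S" unfolding S_def using 1 2 h(1) h2 h3 h4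
        by (intro CollectI exI[where x=l] exI[where x="?m"] exI[where x="\<sigma> a"] exI[where x="\<sigma> b"]) simp
    next
      assume hh: "\<psi> = Neg (phi_inst (fst (ps ! l)) n (snd (ps ! l)) m) \<and> Neg (phi_inst ?st n ?ks (code K ?j (snd (ps ! l)) l m a b)) \<in> P"
      then have 1: "x = Neg (phi_inst (fst (ps ! l)) n (snd (ps ! l)) ?m)" using \<psi>(2) e1 by simp
      have "map_par \<sigma> (Neg (phi_inst ?st n ?ks (code K ?j (snd (ps ! l)) l m a b))) \<in> P" using hh Pinv by blast
      then have 2: "Neg (phi_inst ?st n ?ks (code K ?j (snd (ps ! l)) l ?m (\<sigma> a) (\<sigma> b))) \<in> P" using e2 by simp
      show "x \<in> S" unfolding S_def using 1 2 h(1) h2 h3 h4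
        by (intro CollectI exI[where x=l] exI[where x="?m"] exI[where x="\<sigma> a"] exI[where x="\<sigma> b"]) simp
    qed
  qed
  show ?thesis unfolding goodS_def using pa co fs inv by blast
qed




lemma good_exists:
  fixes N M :: "('f, 'r, 'a) struct" and q :: "('f, 'r, 'a) fm set"
    and \<Phi> :: "(('f, 'r, 'a) fm \<times> nat) set"
  assumes i: "\<And>n k \<chi> \<phi>. fm_over ar_f ar_r A \<chi> \<Longrightarrow> fv \<chi> \<subseteq> {..<n} \<Longrightarrow> (\<exists>e. (\<forall>i. e i \<in> dom M) \<and> sat M e \<chi>)
      \<Longrightarrow> L_fm ar_f ar_r \<phi> \<Longrightarrow> fv \<phi> \<subseteq> {..<n + k}
      \<Longrightarrow> \<exists>p. phi_type N n k \<phi> p \<and> invariant ar_f ar_r N A p \<and> finsat N (insert \<chi> p)"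
    and q: "complete_type ar_f ar_r M A n q"
    and Phi: "finite \<Phi>" "\<And>\<phi> k. (\<phi>, k) \<in> \<Phi> \<Longrightarrow> L_fm ar_f ar_r \<phi> \<and> fv \<phi> \<subseteq> {..<n + k}"
    and Q: "finite Q" "Q \<subseteq> q"
  shows "\<exists>S. goodS ar_f ar_r N A n \<Phi> Q S"
proof -
  obtain ps where ps: "set ps = \<Phi>" using finite_list[OF Phi(1)] by blast
  obtain qs where qs: "set qs = Q" using finite_list[OF Q(1)] by blast
  define K where "K = sum_list (map snd ps)"
  have Kle: "snd (ps ! l) \<le> K" if "l < length ps" for l
  proof -
    have "snd (ps ! l) \<in> set (map snd ps)" using that by simp
    then show ?thesis unfolding K_def by (rule member_le_sum_list) simp
  qed
  have Phi': "\<And>\<phi> k. (\<phi>, k) \<in> set ps \<Longrightarrow> L_fm ar_f ar_r \<phi> \<and> fv \<phi> \<subseteq> {..<n + k}" using Phi(2) ps by blast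
  have Pl: "L_fm ar_f ar_r (fst (ps ! l)) \<and> fv (fst (ps ! l)) \<subseteq> {..<n + snd (ps ! l)}" if "l < length ps" for l
    using Phi'[of "fst (ps ! l)" "snd (ps ! l)"] that by simp
  define \<chi> where "\<chi> = conjs qs"
  have qfm: "\<forall>\<psi>\<in>q. fm_over ar_f ar_r A \<psi> \<and> fv \<psi> \<subseteq> {..<n}" using q unfolding complete_type_def by blast
  have chi1: "fm_over ar_f ar_r A \<chi>"
    using qfm Q(2) qs unfolding \<chi>_def fm_over_def wf_conjs pars_conjs by blast
  have chi2: "fv \<chi> \<subseteq> {..<n}" using qfm Q(2) qs unfolding \<chi>_def fv_conjs by blast
  have chi3: "\<exists>e. (\<forall>i. e i \<in> dom M) \<and> sat M e \<chi>"
  proof -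
    have "finsat M q" using q unfolding complete_type_def by blast
    then obtain e where "\<forall>i. e i \<in> dom M" "\<forall>\<psi>\<in>Q. sat M e \<psi>" using Q unfolding finsat_def by blast
    then show ?thesis unfolding \<chi>_def sat_conjs qs by blast
  qed
  let ?st = "phistar n K ps"
  have st1: "L_fm ar_f ar_r ?st"
  proof -
    have "\<forall>l\<in>set [0..<length ps]. wf_fm ar_f ar_r (fst (ps ! l)) \<and> pars (fst (ps ! l)) = {}"
      using Pl unfolding fm_over_def by auto
    then show ?thesis unfolding phistar_def fm_over_def wf_conjs pars_conjs by (auto simp: Imp_def)
  qed
  have st2: "fv ?st \<subseteq> {..<n + (K + length ps + 1)}"
  proof -
    have "\<forall>l\<in>set [0..<length ps]. fv (fst (ps ! l)) \<subseteq> {..<n + K}"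
    proof
      fix l assume "l \<in> set [0..<length ps]"
      then have l: "l < length ps" by simp
      then show "fv (fst (ps ! l)) \<subseteq> {..<n + K}" using Pl[OF l] Kle[OF l] by fastforce
    qed
    then show ?thesis unfolding phistar_def fv_conjs by (fastforce simp: Imp_def)
  qed
  obtain P where P: "phi_type N n (K + length ps + 1) ?st P" "invariant ar_f ar_r N A P" "finsat N (insert \<chi> P)"
    using i[OF chi1 chi2 chi3 st1 st2] by blast
  have chiQ: "\<And>e. sat N e \<chi> \<Longrightarrow> \<forall>\<psi>\<in>Q. sat N e \<psi>" unfolding \<chi>_def sat_conjs qs by blast
  show ?thesis
  proof (cases "\<exists>a0\<in>dom N. \<exists>b0\<in>dom N. a0 \<noteq> b0")
    case True
    then obtain a0 b0 where ab0: "a0 \<in> dom N" "b0 \<in> dom N" "a0 \<noteq> b0" by blast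
    show ?thesis using good_nontriv[OF ab0 Kle Phi' P chiQ] ps by simp
  next
    case False
    then have triv: "\<forall>a\<in>dom N. \<forall>b\<in>dom N. a = b" by blast
    have "finsat N {\<chi>}" using finsat_mono[OF P(3)] by blast
    then obtain e0 where e0: "\<forall>i. e0 i \<in> dom N" "sat N e0 \<chi>" unfolding finsat_def by blast
    show ?thesis using good_triv[OF triv e0(1) chiQ[OF e0(2)] Phi(2)] by blast
  qed
qed




lemma cone_fip:
  fixes I :: "('x set \<times> 'y set) set"
  assumes "finite F" "F \<subseteq> {{x \<in> I. \<Phi>0 \<subseteq> fst x \<and> Q0 \<subseteq> snd x} | \<Phi>0 Q0. (\<Phi>0, Q0) \<in> I}"
    and I0: "({}, {}) \<in> I"
    and Iun: "\<forall>a\<in>I. \<forall>b\<in>I. (fst a \<union> fst b, snd a \<union> snd b) \<in> I"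
  shows "\<exists>y\<in>I. \<forall>x\<in>I. fst y \<subseteq> fst x \<and> snd y \<subseteq> snd x \<longrightarrow> (\<forall>X\<in>F. x \<in> X)"
  using assms(1,2)
proof (induction F rule: finite_induct)
  case empty then show ?case using I0 by blast
next
  case (insert X F)
  have XB: "X \<in> {{x \<in> I. \<Phi>0 \<subseteq> fst x \<and> Q0 \<subseteq> snd x} | \<Phi>0 Q0. (\<Phi>0, Q0) \<in> I}"
    and FB: "F \<subseteq> {{x \<in> I. \<Phi>0 \<subseteq> fst x \<and> Q0 \<subseteq> snd x} | \<Phi>0 Q0. (\<Phi>0, Q0) \<in> I}"
    using insert.prems by (simp_all only: insert_subset)
  obtain y where y: "y \<in> I" "\<forall>x\<in>I. fst y \<subseteq> fst x \<and> snd y \<subseteq> snd x \<longrightarrow> (\<forall>X\<in>F. x \<in> X)"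
    using insert.IH[OF FB] by (elim bexE) 
  have "\<exists>\<Phi>0 Q0. X = {x \<in> I. \<Phi>0 \<subseteq> fst x \<and> Q0 \<subseteq> snd x} \<and> (\<Phi>0, Q0) \<in> I"
    using XB by (simp only: mem_Collect_eq)
  then obtain \<Phi>0 Q0 where X: "X = {x \<in> I. \<Phi>0 \<subseteq> fst x \<and> Q0 \<subseteq> snd x}" "(\<Phi>0, Q0) \<in> I"
    by (elim exE conjE)
  let ?y = "(fst y \<union> \<Phi>0, snd y \<union> Q0)"
  have "?y \<in> I" using bspec[OF bspec[OF Iun y(1)] X(2)] by simp
  moreover have "\<forall>x\<in>I. fst ?y \<subseteq> fst x \<and> snd ?y \<subseteq> snd x \<longrightarrow> (\<forall>X'\<in>insert X F. x \<in> X')"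
  proof (intro ballI impI)
    fix x X' assume x: "x \<in> I" "fst ?y \<subseteq> fst x \<and> snd ?y \<subseteq> snd x" and X': "X' \<in> insert X F"
    show "x \<in> X'"
    proof (cases "X' = X")
      case True then show ?thesis using x X(1) by auto
    next
      case False
      then have "X' \<in> F" using X' by blast
      moreover have "fst y \<subseteq> fst x \<and> snd y \<subseteq> snd x" using x by auto
      ultimately show ?thesis using y(2) x(1) by blast
    qed
  qed
  ultimately show ?case by blast
qed

lemma dir12:
  fixes N M :: "('f, 'r, 'a) struct" and q :: "('f, 'r, 'a) fm set"
  assumes i: "\<And>n k \<chi> \<phi>. fm_over ar_f ar_r A \<chi> \<Longrightarrow> fv \<chi> \<subseteq> {..<n} \<Longrightarrow> (\<exists>e. (\<forall>i. e i \<in> dom M) \<and> sat M e \<chi>)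
      \<Longrightarrow> L_fm ar_f ar_r \<phi> \<Longrightarrow> fv \<phi> \<subseteq> {..<n + k}
      \<Longrightarrow> \<exists>p. phi_type N n k \<phi> p \<and> invariant ar_f ar_r N A p \<and> finsat N (insert \<chi> p)"
    and q: "complete_type ar_f ar_r M A n q"
    and N: "is_struct ar_f N" "A \<subseteq> dom N"
  shows "\<exists>p. complete_type ar_f ar_r N (dom N) n p \<and> q \<subseteq> p \<and> invariant ar_f ar_r N A p"
proof -
  define Lphis :: "(('f, 'r, 'a) fm \<times> nat) set" where "Lphis = {(\<phi>, k). L_fm ar_f ar_r \<phi> \<and> fv \<phi> \<subseteq> {..<n + k}}"
  define I where "I = {(\<Phi>, Q). finite \<Phi> \<and> \<Phi> \<subseteq> Lphis \<and> finite Q \<and> Q \<subseteq> q}"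
  define cone where "cone \<Phi>0 Q0 = {x \<in> I. \<Phi>0 \<subseteq> fst x \<and> Q0 \<subseteq> snd x}" for \<Phi>0 Q0
  define Bc where "Bc = {{x \<in> I. \<Phi>0 \<subseteq> fst x \<and> Q0 \<subseteq> snd x} | \<Phi>0 Q0. (\<Phi>0, Q0) \<in> I}"
  have coneB: "cone \<Phi>0 Q0 \<in> Bc" if "(\<Phi>0, Q0) \<in> I" for \<Phi>0 Q0
    unfolding Bc_def mem_Collect_eq
    by (intro exI[where x=\<Phi>0] exI[where x=Q0] conjI) (simp add: cone_def, rule that)
  have I0: "({}, {}) \<in> I" unfolding I_def by simp
  have Iun: "\<forall>a\<in>I. \<forall>b\<in>I. (fst a \<union> fst b, snd a \<union> snd b) \<in> I"
    unfolding I_def by auto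
  have Bsub: "Bc \<subseteq> Pow I" unfolding Bc_def by auto
  have Bfip: "fipI I Bc" unfolding fipI_def
  proof (intro allI impI)
    fix F assume F: "finite F \<and> F \<subseteq> Bc"
    then have F1: "finite F" and F2: "F \<subseteq> {{x \<in> I. \<Phi>0 \<subseteq> fst x \<and> Q0 \<subseteq> snd x} | \<Phi>0 Q0. (\<Phi>0, Q0) \<in> I}"
      unfolding Bc_def by auto
    obtain y where "y \<in> I" "\<forall>x\<in>I. fst y \<subseteq> fst x \<and> snd y \<subseteq> snd x \<longrightarrow> (\<forall>X\<in>F. x \<in> X)"
      using cone_fip[OF F1 F2 I0 Iun] by (elim bexE)
    then have "y \<in> I \<inter> \<Inter>F" by blast
    then show "I \<inter> \<Inter>F \<noteq> {}" by blast
  qed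
  obtain U where U: "Bc \<subseteq> U" "U \<subseteq> Pow I" "fipI I U" "\<forall>X\<subseteq>I. X \<in> U \<or> I - X \<in> U"
    using ultra_exists[OF Bsub Bfip] by (elim exE conjE)
  have fip2: "I \<inter> \<Inter>G \<noteq> {}" if "finite G" "G \<subseteq> U" for G using U(3) that unfolding fipI_def by blast
  define Sf where "Sf x = (SOME S. goodS ar_f ar_r N A n (fst x) (snd x) S)" for x
  have good: "goodS ar_f ar_r N A n (fst x) (snd x) (Sf x)" if "x \<in> I" for x
  proof -
    have x: "finite (fst x)" "fst x \<subseteq> Lphis" "finite (snd x)" "snd x \<subseteq> q" using that unfolding I_def by auto
    have "\<exists>S. goodS ar_f ar_r N A n (fst x) (snd x) S"
    proof (rule good_exists[OF i q x(1) _ x(3) x(4)])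
      fix \<phi> k assume "(\<phi>, k) \<in> fst x"
      then show "L_fm ar_f ar_r \<phi> \<and> fv \<phi> \<subseteq> {..<n + k}" using x(2) unfolding Lphis_def by blast
    qed blast+
    then show ?thesis unfolding Sf_def by (rule someI_ex)
  qed
  define Xs where "Xs \<psi> = {x \<in> I. \<psi> \<in> Sf x}" for \<psi>
  define p where "p = {\<psi>. fm_over ar_f ar_r (dom N) \<psi> \<and> fv \<psi> \<subseteq> {..<n} \<and> Xs \<psi> \<in> U}"
  have XsI: "Xs \<psi> \<subseteq> I" for \<psi> unfolding Xs_def by blast
  have F1: "finsat N (p \<union> q)" unfolding finsat_def
  proof (intro allI impI)
    fix F assume F: "F \<subseteq> p \<union> q \<and> finite F"
    let ?G = "insert (cone {} (F \<inter> q)) (Xs ` (F \<inter> p))"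
    have "({}, F \<inter> q) \<in> I" using F unfolding I_def by auto
    then have "cone {} (F \<inter> q) \<in> U" using coneB U(1) by blast
    moreover have "Xs ` (F \<inter> p) \<subseteq> U" unfolding p_def by blast
    ultimately have "?G \<subseteq> U" by blast
    moreover have "finite ?G" using F by simp
    ultimately have "I \<inter> \<Inter>?G \<noteq> {}" by (rule fip2[rotated])
    then obtain x where x: "x \<in> I" "x \<in> cone {} (F \<inter> q)" "\<forall>\<psi>\<in>F \<inter> p. x \<in> Xs \<psi>" by blast
    have "F \<inter> q \<subseteq> snd x" using x(2) unfolding cone_def by blast
    moreover have "F \<inter> p \<subseteq> Sf x" using x(3) unfolding Xs_def by blast
    ultimately have "F \<subseteq> Sf x \<union> snd x" using F by blast
    moreover have "finsat N (Sf x \<union> snd x)" using good[OF x(1)] unfolding goodS_def by blast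
    ultimately show "\<exists>e. (\<forall>i. e i \<in> dom N) \<and> (\<forall>\<psi>\<in>F. sat N e \<psi>)" using F unfolding finsat_def by blast
  qed
  obtain d where d: "d \<in> dom N" using N(1) unfolding is_struct_def by blast
  have F2: "\<psi> \<in> p \<or> Neg \<psi> \<in> p" if \<psi>: "fm_over ar_f ar_r (dom N) \<psi>" "fv \<psi> \<subseteq> {..<n}" for \<psi>
  proof (rule ccontr)
    assume nn: "\<not> (\<psi> \<in> p \<or> Neg \<psi> \<in> p)"
    obtain \<phi> k m where r: "L_fm ar_f ar_r \<phi>" "fv \<phi> \<subseteq> {..<n + k}" "\<forall>i<k. m i \<in> dom N" "phi_inst \<phi> n k m = \<psi>"
      using represent[OF \<psi> d] by blast
    have "({(\<phi>, k)}, {}) \<in> I" using r unfolding I_def Lphis_def by auto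
    then have C: "cone {(\<phi>, k)} {} \<in> U" using coneB U(1) by blast
    have "Xs \<psi> \<notin> U" using nn \<psi> unfolding p_def by blast
    then have 1: "I - Xs \<psi> \<in> U" using U(4) XsI by blast
    have "Xs (Neg \<psi>) \<notin> U" using nn \<psi> unfolding p_def by (auto simp: fm_over_Neg)
    then have 2: "I - Xs (Neg \<psi>) \<in> U" using U(4) XsI by blast
    have "I \<inter> \<Inter>{cone {(\<phi>, k)} {}, I - Xs \<psi>, I - Xs (Neg \<psi>)} \<noteq> {}"
      using C 1 2 by (intro fip2) auto
    then obtain x where x: "x \<in> I" "x \<in> cone {(\<phi>, k)} {}" "x \<notin> Xs \<psi>" "x \<notin> Xs (Neg \<psi>)" by blast
    have "(\<phi>, k) \<in> fst x" using x(2) unfolding cone_def by blast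
    then have "phi_inst \<phi> n k m \<in> Sf x \<or> Neg (phi_inst \<phi> n k m) \<in> Sf x"
      using good[OF x(1)] r(3) unfolding goodS_def by blast
    then show False using x r(4) unfolding Xs_def by blast
  qed
  have F3: "q \<subseteq> p"
  proof
    fix \<psi> assume "\<psi> \<in> q"
    then have "fm_over ar_f ar_r A \<psi>" "fv \<psi> \<subseteq> {..<n}" using q unfolding complete_type_def by blast+
    then have \<psi>: "fm_over ar_f ar_r (dom N) \<psi>" "fv \<psi> \<subseteq> {..<n}" using N(2) unfolding fm_over_def by blast+
    show "\<psi> \<in> p"
    proof (rule ccontr)
      assume "\<psi> \<notin> p"
      then have "Neg \<psi> \<in> p" using F2[OF \<psi>] by blast
      then have "{\<psi>, Neg \<psi>} \<subseteq> p \<union> q" using \<open>\<psi> \<in> q\<close> by blast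
      then obtain e where "\<forall>\<chi>\<in>{\<psi>, Neg \<psi>}. sat N e \<chi>" using F1 unfolding finsat_def by blast
      then show False by simp
    qed
  qed
  have F4: "invariant ar_f ar_r N A p"
  proof (rule invariant_intro[OF N])
    show "\<forall>\<psi>\<in>p. pars \<psi> \<subseteq> dom N" unfolding p_def fm_over_def by blast
    fix \<sigma> assume au: "automorphism ar_f ar_r N \<sigma>" and fx: "\<forall>a\<in>A. \<sigma> a = a"
    show "map_par \<sigma> ` p \<subseteq> p"
    proof
      fix x assume "x \<in> map_par \<sigma> ` p"
      then obtain \<psi> where \<psi>: "\<psi> \<in> p" "x = map_par \<sigma> \<psi>" by blast
      have w: "wf_fm ar_f ar_r \<psi>" "pars \<psi> \<subseteq> dom N" "fv \<psi> \<subseteq> {..<n}" "Xs \<psi> \<in> U"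
        using \<psi>(1) unfolding p_def fm_over_def by blast+
      have "pars x \<subseteq> dom N" unfolding \<psi>(2) pars_map_par using w(2) aut_in[OF au] by blast
      then have a1: "fm_over ar_f ar_r (dom N) x" unfolding fm_over_def \<psi>(2) using w(1) wf_map_par by blast
      have a2: "fv x \<subseteq> {..<n}" unfolding \<psi>(2) fv_map_par using w(3) .
      have "I \<inter> Xs \<psi> \<subseteq> Xs x"
      proof
        fix y assume y: "y \<in> I \<inter> Xs \<psi>"
        then have "\<psi> \<in> Sf y" "y \<in> I" unfolding Xs_def by blast+
        moreover have "map_par \<sigma> ` Sf y \<subseteq> Sf y"
        proof -
          have "\<forall>\<sigma>. automorphism ar_f ar_r N \<sigma> \<and> (\<forall>a\<in>A. \<sigma> a = a) \<longrightarrow> map_par \<sigma> ` Sf y \<subseteq> Sf y"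
            using good[OF \<open>y \<in> I\<close>] unfolding goodS_def by (elim conjE)
          then show ?thesis using au fx by blast
        qed
        ultimately have "x \<in> Sf y" using \<psi>(2) by blast
        then show "y \<in> Xs x" unfolding Xs_def using \<open>y \<in> I\<close> by blast
      qed
      then have "Xs x \<in> U" using fipI_up[OF U(3) U(4) w(4) _ XsI] by blast
      then show "x \<in> p" unfolding p_def using a1 a2 by blast
    qed
  qed
  have "complete_type ar_f ar_r N (dom N) n p"
    unfolding complete_type_def
  proof (intro conjI)
    show "\<forall>\<phi>\<in>p. fm_over ar_f ar_r (dom N) \<phi> \<and> fv \<phi> \<subseteq> {..<n}" unfolding p_def by blast
    show "finsat N p" using finsat_mono[OF F1] by blast
    show "\<forall>\<phi>. fm_over ar_f ar_r (dom N) \<phi> \<and> fv \<phi> \<subseteq> {..<n} \<longrightarrow> \<phi> \<in> p \<or> Neg \<phi> \<in> p" using F2 by blast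
  qed
  then show ?thesis using F3 F4 by blast
qed




theorem mainTheorem14:
  fixes ar_f :: "'f \<Rightarrow> nat" and ar_r :: "'r \<Rightarrow> nat"
    and T :: "('f, 'r, 'a) fm set" and M :: "('f, 'r, 'a) struct" and A :: "'a set"
  assumes "is_theory ar_f ar_r T" and "models ar_f ar_r T M" and "A \<subseteq> dom M"
  shows "(\<forall>n k (\<chi> :: ('f, 'r, 'a) fm) \<phi> N.
            fm_over ar_f ar_r A \<chi> \<and> fv \<chi> \<subseteq> {..<n} \<and>
            (\<exists>e. (\<forall>i. e i \<in> dom M) \<and> sat M e \<chi>) \<and>
            L_fm ar_f ar_r \<phi> \<and> fv \<phi> \<subseteq> {..<n + k} \<and>
            models ar_f ar_r T N \<and> equiv_over ar_f ar_r A M N \<longrightarrow>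
            (\<exists>p. phi_type N n k \<phi> p \<and> invariant ar_f ar_r N A p \<and> finsat N (insert \<chi> p)))
     \<longleftrightarrow>
         (\<forall>N. models ar_f ar_r T N \<and> equiv_over ar_f ar_r A M N \<longrightarrow>
            (\<forall>n q. complete_type ar_f ar_r M A n q \<longrightarrow>
               (\<exists>p. complete_type ar_f ar_r N (dom N) n p \<and> q \<subseteq> p \<and> invariant ar_f ar_r N A p)))"
  (is "?L \<longleftrightarrow> ?R")
proof
  assume L: ?L
  show ?R
  proof (intro allI impI)
    fix N :: "('f, 'r, 'a) struct" and n and q :: "('f, 'r, 'a) fm set"
    assume N: "models ar_f ar_r T N \<and> equiv_over ar_f ar_r A M N" and q: "complete_type ar_f ar_r M A n q"
    have Ns: "is_struct ar_f N" using N unfolding models_def by blast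
    have NA: "A \<subseteq> dom N" using N unfolding equiv_over_def by blast
    show "\<exists>p. complete_type ar_f ar_r N (dom N) n p \<and> q \<subseteq> p \<and> invariant ar_f ar_r N A p"
    proof (rule dir12[OF _ q Ns NA])
      fix n' k \<chi> \<phi>
      assume h: "fm_over ar_f ar_r A (\<chi> :: ('f, 'r, 'a) fm)" "fv \<chi> \<subseteq> {..<n'}" "\<exists>e. (\<forall>i. e i \<in> dom M) \<and> sat M e \<chi>"
        "L_fm ar_f ar_r (\<phi> :: ('f, 'r, 'a) fm)" "fv \<phi> \<subseteq> {..<n' + k}"
      show "\<exists>p. phi_type N n' k \<phi> p \<and> invariant ar_f ar_r N A p \<and> finsat N (insert \<chi> p)"
        using L h N by blast
    qed
  qed
next
  assume R: ?R
  show ?L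
  proof (intro allI impI)
    fix n k and \<chi> :: "('f, 'r, 'a) fm" and \<phi> :: "('f, 'r, 'a) fm" and N :: "('f, 'r, 'a) struct"
    assume h: "fm_over ar_f ar_r A \<chi> \<and> fv \<chi> \<subseteq> {..<n} \<and>
            (\<exists>e. (\<forall>i. e i \<in> dom M) \<and> sat M e \<chi>) \<and>
            L_fm ar_f ar_r \<phi> \<and> fv \<phi> \<subseteq> {..<n + k} \<and>
            models ar_f ar_r T N \<and> equiv_over ar_f ar_r A M N"
    then obtain e where e: "\<forall>i. e i \<in> dom M" "sat M e \<chi>" by blast
    have N: "models ar_f ar_r T N \<and> equiv_over ar_f ar_r A M N" using h by blast
    have Ns: "is_struct ar_f N" using N unfolding models_def by blast
    have NA: "A \<subseteq> dom N" using N unfolding equiv_over_def by blast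
    have ii: "\<And>n q. complete_type ar_f ar_r M A n q \<Longrightarrow>
               (\<exists>p. complete_type ar_f ar_r N (dom N) n p \<and> q \<subseteq> p \<and> invariant ar_f ar_r N A p)"
      using R N by blast
    show "\<exists>p. phi_type N n k \<phi> p \<and> invariant ar_f ar_r N A p \<and> finsat N (insert \<chi> p)"
      by (rule dir21[OF ii _ _ e(1) e(2) _ _ Ns NA]) (use h in blast)+
  qed
qed



end
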